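(* Let $k \geq 3$ be an integer. For all integers $\Delta \geq 2$ and odd $\ell \geq 3$ there exists $n_0$ such that for all $n \geq n_0$ the following holds. Let $m = n/\ell + n/(\log n)^2$. Let $T$ be a tree on $n$ vertices with $\Delta_1(T) \leq \Delta$, and let $H$ be the $m$-blow-up of a $k$-uniform loose cycle of length $\ell$. Then there is an embedding $\psi$ of $T^{(k)}$ into $H$ such that for each cluster $X$ of $H$, \[ \frac{n}{\ell} - \frac{((\ell-1)(k-1)-1)n}{(\log n)^2} - (k-2) \leq |V(\psi(T^{(k)})) \cap X| \leq \frac{n}{\ell} + \frac{n}{(\log n)^2}. \]
   Context: Rounding is ignored: $m$ is treated as an integer. $\Delta_1(T)$ is the maximum vertex degree of $T$. The $k$-expansion $G^{(k)}$ of a graph $G$ is obtained by replacing each edge $uv$ by a $k$-edge consisting of $u$, $v$ and $k-2$ new vertices belonging to no other edge. A $k$-uniform loose cycle of length $\ell$ is the $k$-expansion of a graph cycle with $\ell$ edges (it has $\ell(k-1)$ vertices). For a $k$-graph $F$, its $m$-blow-up $F(m)$ is obtained by replacing each vertex $x$ by a set $V_x$ of $m$ vertices (the clusters) and each edge $\{x_1,\dots,x_k\}$ by the complete $k$-partite $k$-graph with parts $V_{x_1},\dots,V_{x_k}$. An embedding is an injective edge-preserving map. *)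

theory Defs
  imports Complex_Main
begin

definition is_graph :: "'a set \<Rightarrow> 'a set set \<Rightarrow> bool" where
  "is_graph V E \<longleftrightarrow> finite V \<and> (\<forall>e\<in>E. e \<subseteq> V \<and> card e = 2)"

definition is_walk :: "'a set \<Rightarrow> 'a set set \<Rightarrow> 'a list \<Rightarrow> bool" where
  "is_walk V E xs \<longleftrightarrow> xs \<noteq> [] \<and> set xs \<subseteq> V \<and>
     (\<forall>i. Suc i < length xs \<longrightarrow> {xs ! i, xs ! Suc i} \<in> E)"

definition graph_connected :: "'a set \<Rightarrow> 'a set set \<Rightarrow> bool" where
  "graph_connected V E \<longleftrightarrow>
     (\<forall>u\<in>V. \<forall>v\<in>V. \<exists>xs. is_walk V E xs \<and> hd xs = u \<and> last xs = v)"

definition is_graph_cycle :: "'a set \<Rightarrow> 'a set set \<Rightarrow> 'a list \<Rightarrow> bool" where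
  "is_graph_cycle V E xs \<longleftrightarrow> is_walk V E xs \<and> distinct xs \<and> length xs \<ge> 3 \<and>
     {last xs, hd xs} \<in> E"

definition is_tree :: "'a set \<Rightarrow> 'a set set \<Rightarrow> bool" where
  "is_tree V E \<longleftrightarrow> is_graph V E \<and> V \<noteq> {} \<and> graph_connected V E \<and>
     \<not> (\<exists>xs. is_graph_cycle V E xs)"

definition degree :: "'a set \<Rightarrow> 'a set set \<Rightarrow> 'a \<Rightarrow> nat" where
  "degree V E v = card {u\<in>V. {u, v} \<in> E}"

definition max_degree :: "'a set \<Rightarrow> 'a set set \<Rightarrow> nat" where
  "max_degree V E = Max (degree V E ` V)"

definition exp_verts :: "nat \<Rightarrow> 'a set \<Rightarrow> 'a set set \<Rightarrow> ('a + ('a set \<times> nat)) set" where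
  "exp_verts k V E = Inl ` V \<union> {Inr (e, i) | e i. e \<in> E \<and> i < k - 2}"

definition exp_edge :: "nat \<Rightarrow> 'a set \<Rightarrow> ('a + ('a set \<times> nat)) set" where
  "exp_edge k e = Inl ` e \<union> {Inr (e, i) | i. i < k - 2}"

definition exp_edges :: "nat \<Rightarrow> 'a set set \<Rightarrow> ('a + ('a set \<times> nat)) set set" where
  "exp_edges k E = exp_edge k ` E"

definition cycle_verts :: "nat \<Rightarrow> nat set" where
  "cycle_verts l = {..<l}"

definition cycle_edges :: "nat \<Rightarrow> nat set set" where
  "cycle_edges l = {{i, Suc i mod l} | i. i < l}"

definition loose_cycle_verts :: "nat \<Rightarrow> nat \<Rightarrow> (nat + (nat set \<times> nat)) set" where
  "loose_cycle_verts k l = exp_verts k (cycle_verts l) (cycle_edges l)"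

definition loose_cycle_edges :: "nat \<Rightarrow> nat \<Rightarrow> (nat + (nat set \<times> nat)) set set" where
  "loose_cycle_edges k l = exp_edges k (cycle_edges l)"

definition cluster :: "nat \<Rightarrow> 'b \<Rightarrow> ('b \<times> nat) set" where
  "cluster m x = {x} \<times> {..<m}"

definition blowup_verts :: "nat \<Rightarrow> 'b set \<Rightarrow> ('b \<times> nat) set" where
  "blowup_verts m W = W \<times> {..<m}"

text \<open>Each edge f is replaced by the complete |f|-partite hypergraph on its clusters.\<close>
definition blowup_edges :: "nat \<Rightarrow> 'b set set \<Rightarrow> ('b \<times> nat) set set" where
  "blowup_edges m F = {(\<lambda>x. (x, g x)) ` f | f g. f \<in> F \<and> (\<forall>x\<in>f. g x < m)}"

definition is_embedding ::
  "('a \<Rightarrow> 'b) \<Rightarrow> 'a set \<Rightarrow> 'a set set \<Rightarrow> 'b set \<Rightarrow> 'b set set \<Rightarrow> bool" where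
  "is_embedding \<psi> V1 E1 V2 E2 \<longleftrightarrow>
     \<psi> ` V1 \<subseteq> V2 \<and> inj_on \<psi> V1 \<and> (\<forall>f\<in>E1. \<psi> ` f \<in> E2)"

end

theory Submission
  imports Defs "HOL-Real_Asymp.Real_Asymp"
begin

lemma successively_nth:
  "successively P xs \<longleftrightarrow> (\<forall>i. Suc i < length xs \<longrightarrow> P (xs ! i) (xs ! Suc i))"
proof (induction xs rule: induct_list012)
  case (3 x y xs)
  show ?case
  proof
    assume H: "successively P (x # y # xs)"
    show "\<forall>i. Suc i < length (x # y # xs) \<longrightarrow> P ((x # y # xs) ! i) ((x # y # xs) ! Suc i)"
    proof (intro allI impI)
      fix i assume "Suc i < length (x # y # xs)"
      then show "P ((x # y # xs) ! i) ((x # y # xs) ! Suc i)"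
        using H 3 by (cases i) auto
    qed
  next
    assume H: "\<forall>i. Suc i < length (x # y # xs) \<longrightarrow> P ((x # y # xs) ! i) ((x # y # xs) ! Suc i)"
    have "P x y" using H[rule_format, of 0] by simp
    moreover have "\<forall>i. Suc i < length (y # xs) \<longrightarrow> P ((y # xs) ! i) ((y # xs) ! Suc i)"
      using H[rule_format, of "Suc _"] by auto
    ultimately show "successively P (x # y # xs)" using 3 by simp
  qed
qed auto

lemma is_walk_succ:
  "is_walk V E xs \<longleftrightarrow> xs \<noteq> [] \<and> set xs \<subseteq> V \<and> successively (\<lambda>a b. {a, b} \<in> E) xs"
  unfolding is_walk_def successively_nth by blast

lemma walk_suffix:
  assumes "is_walk V E (as @ zs)" "zs \<noteq> []"
  shows "is_walk V E zs"
  using assms unfolding is_walk_succ by (auto simp: successively_append_iff)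

lemma edge_card2:
  assumes "is_graph V E" "{a, b} \<in> E"
  shows "a \<noteq> b"
proof
  assume "a = b"
  then have "card {a, b} = 1" by simp
  moreover have "card {a, b} = 2" using assms unfolding is_graph_def by blast
  ultimately show False by simp
qed

lemma edge_in_V:
  assumes "is_graph V E" "{a, b} \<in> E"
  shows "a \<in> V" "b \<in> V"
  using assms unfolding is_graph_def by auto

lemma longest_path:
  assumes G: "is_graph V E" and ne: "v \<in> V"
  shows "\<exists>xs. is_walk V E xs \<and> distinct xs \<and>
          (\<forall>ys. is_walk V E ys \<and> distinct ys \<longrightarrow> length ys \<le> length xs)"
proof -
  have fin: "finite V" using G unfolding is_graph_def by simp
  let ?P = "\<lambda>n. \<exists>xs. is_walk V E xs \<and> distinct xs \<and> length xs = n"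
  have "?P 1" using ne by (intro exI[of _ "[v]"]) (auto simp: is_walk_def)
  moreover have "\<forall>n. ?P n \<longrightarrow> n \<le> card V"
  proof (intro allI impI)
    fix n assume "?P n"
    then obtain xs where "is_walk V E xs" "distinct xs" "length xs = n" by blast
    then show "n \<le> card V"
      by (metis card_mono distinct_card fin is_walk_def)
  qed
  ultimately obtain n where "?P n" "\<forall>m. ?P m \<longrightarrow> m \<le> n"
    using Nat.ex_has_greatest_nat[of ?P 1 "card V"] by blast
  then show ?thesis by blast
qed

lemma tree_leaf:
  assumes T: "is_tree V E" and c: "card V \<ge> 2"
  shows "\<exists>x y. x \<in> V \<and> y \<in> V \<and> x \<noteq> y \<and> {x, y} \<in> E \<and> (\<forall>w. {w, x} \<in> E \<longrightarrow> w = y)"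
proof -
  have G: "is_graph V E" and C: "graph_connected V E" and NC: "\<not> (\<exists>xs. is_graph_cycle V E xs)"
    using T unfolding is_tree_def by auto
  have fin: "finite V" using G unfolding is_graph_def by simp
  obtain u v where uv: "u \<in> V" "v \<in> V" "u \<noteq> v"
    using c fin card_le_Suc0_iff_eq[OF fin] by force
  then obtain zs where zs: "is_walk V E zs" "hd zs = u" "last zs = v"
    using C unfolding graph_connected_def by blast
  have "length zs \<ge> 2"
  proof (rule ccontr)
    assume "\<not> 2 \<le> length zs"
    moreover have "zs \<noteq> []" using zs(1) unfolding is_walk_def by simp
    ultimately obtain a where "zs = [a]" by (cases zs) (auto simp: Suc_le_eq)
    then show False using zs uv by simp
  qed
  then have e01: "{zs ! 0, zs ! 1} \<in> E" using zs(1) unfolding is_walk_def by auto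
  have w2: "is_walk V E [zs ! 0, zs ! 1] \<and> distinct [zs ! 0, zs ! 1]"
    using e01 edge_card2[OF G e01] edge_in_V[OF G e01] by (auto simp: is_walk_def less_Suc_eq)
  obtain xs where xs: "is_walk V E xs" "distinct xs"
    and mx: "\<forall>ys. is_walk V E ys \<and> distinct ys \<longrightarrow> length ys \<le> length xs"
    using longest_path[OF G uv(1)] by blast
  have "length [zs ! 0, zs ! 1] \<le> length xs" using mx w2 by blast
  then have "length xs \<ge> 2" by simp
  then obtain ys y x where xsd: "xs = ys @ [y, x]"
  proof -
    obtain ys' x where 1: "xs = ys' @ [x]" using \<open>2 \<le> length xs\<close> by (cases xs rule: rev_cases) auto
    then have "ys' \<noteq> []" using \<open>2 \<le> length xs\<close> by auto
    then obtain ys y where "ys' = ys @ [y]" by (cases ys' rule: rev_cases) auto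
    then show ?thesis using that 1 by simp
  qed
  have wyx: "is_walk V E [y, x]" using walk_suffix xs(1) xsd by blast
  then have yx: "{y, x} \<in> E" "x \<in> V" "y \<in> V" unfolding is_walk_def by auto
  have "x \<noteq> y" using xs(2) xsd by auto
  moreover have "\<forall>w. {w, x} \<in> E \<longrightarrow> w = y"
  proof (intro allI impI)
    fix w assume wx: "{w, x} \<in> E"
    have wV: "w \<in> V" using edge_in_V[OF G wx] by simp
    have wnx: "w \<noteq> x" using edge_card2[OF G wx] .
    show "w = y"
    proof (rule ccontr)
      assume wy: "w \<noteq> y"
      show False
      proof (cases "w \<in> set xs")
        case False
        have "is_walk V E (xs @ [w])"
          using xs(1) wV wx unfolding is_walk_succ by (auto simp: successively_append_iff xsd insert_commute)
        moreover have "distinct (xs @ [w])" using False xs(2) by simp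
        ultimately have "length (xs @ [w]) \<le> length xs" using mx by blast
        then show False by simp
      next
        case True
        then have "w \<in> set ys" using wy wnx xsd by auto
        then obtain as bs where ys: "ys = as @ w # bs" by (meson split_list)
        let ?c = "w # bs @ [y, x]"
        have "is_walk V E ?c" using walk_suffix[of V E as ?c] xs(1) xsd ys by simp
        moreover have "distinct ?c" using xs(2) xsd ys by simp
        moreover have "length ?c \<ge> 3" by simp
        moreover have "{last ?c, hd ?c} \<in> E" using wx by (simp add: insert_commute)
        ultimately show False using NC unfolding is_graph_cycle_def by blast
      qed
    qed
  qed
  moreover have "{x, y} \<in> E" using yx(1) by (simp add: insert_commute)
  ultimately show ?thesis using yx(2,3) by blast
qed

lemma tree_remove_leaf:
  assumes T: "is_tree V E" and x: "x \<in> V" "y \<in> V" "x \<noteq> y" "{x, y} \<in> E"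
    and uniq: "\<forall>w. {w, x} \<in> E \<longrightarrow> w = y"
  shows "is_tree (V - {x}) (E - {{x, y}})"
proof -
  have G: "is_graph V E" and C: "graph_connected V E" and NC: "\<not> (\<exists>xs. is_graph_cycle V E xs)"
    using T unfolding is_tree_def by auto
  have nox: "x \<notin> e" if "e \<in> E - {{x, y}}" for e
  proof
    assume xe: "x \<in> e"
    have "card e = 2" using G that unfolding is_graph_def by auto
    then obtain a b where ab: "e = {a, b}" "a \<noteq> b" by (meson card_2_iff)
    then have "e = {x, (if a = x then b else a)}" using xe by auto
    moreover have "{(if a = x then b else a), x} \<in> E" using that calculation by (simp add: insert_commute)
    ultimately show False using uniq that by auto
  qed
  have G': "is_graph (V - {x}) (E - {{x, y}})"
    using G nox unfolding is_graph_def by auto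
  have C': "graph_connected (V - {x}) (E - {{x, y}})"
    unfolding graph_connected_def
  proof (intro ballI)
    fix u v assume u: "u \<in> V - {x}" and v: "v \<in> V - {x}"
    let ?P = "\<lambda>zs. is_walk V E zs \<and> hd zs = u \<and> last zs = v"
    obtain zs0 where "?P zs0" using C u v unfolding graph_connected_def by blast
    then obtain zs where zs: "?P zs" and mn: "\<forall>ws. ?P ws \<longrightarrow> length zs \<le> length ws"
      using ex_has_least_nat[of ?P zs0 length] by blast
    have xnot: "x \<notin> set zs"
    proof
      assume "x \<in> set zs"
      then obtain as bs where zsd: "zs = as @ x # bs" by (meson split_list)
      have asne: "as \<noteq> []" using zs zsd u by auto
      have bsne: "bs \<noteq> []" using zs zsd v by auto
      have sc: "successively (\<lambda>a b. {a, b} \<in> E) zs" using zs unfolding is_walk_succ by simp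
      then have "{last as, x} \<in> E" using asne zsd by (auto simp: successively_append_iff)
      then have la: "last as = y" using uniq by blast
      obtain b bs' where bsd: "bs = b # bs'" using bsne by (cases bs) auto
      have sb: "successively (\<lambda>a b. {a, b} \<in> E) (x # b # bs')"
        using sc zsd bsd by (simp add: successively_append_iff)
      then have "{x, b} \<in> E" by simp
      then have hb: "b = y" using uniq by (simp add: insert_commute)
      have sc2: "successively (\<lambda>a b. {a, b} \<in> E) (as @ bs')"
      proof -
        have s1: "successively (\<lambda>a b. {a, b} \<in> E) as" using sc zsd by (simp add: successively_append_iff)
        have s2: "successively (\<lambda>a b. {a, b} \<in> E) (b # bs')" using sb by simp
        then have s3: "successively (\<lambda>a b. {a, b} \<in> E) bs'" by (auto simp: successively_Cons)
        have "bs' \<noteq> [] \<longrightarrow> {last as, hd bs'} \<in> E"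
          using s2 la hb by (auto simp: successively_Cons)
        then show ?thesis using s1 s3 by (auto simp: successively_append_iff)
      qed
      have "?P (as @ bs')"
      proof -
        have "set (as @ bs') \<subseteq> V" using zs zsd bsd unfolding is_walk_def by auto
        moreover have "hd (as @ bs') = u" using zs zsd asne by simp
        moreover have "last (as @ bs') = v"
        proof (cases "bs' = []")
          case True
          then show ?thesis using zs zsd la bsd hb by simp
        next
          case False
          then show ?thesis using zs zsd bsd by simp
        qed
        ultimately show ?thesis using sc2 asne unfolding is_walk_succ by simp
      qed
      then have "length zs \<le> length (as @ bs')" using mn by blast
      then show False using zsd bsd by simp
    qed
    have "is_walk (V - {x}) (E - {{x, y}}) zs"
      using zs xnot unfolding is_walk_succ
      by (auto elim!: successively_mono simp: doubleton_eq_iff)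
    then show "\<exists>xs. is_walk (V - {x}) (E - {{x, y}}) xs \<and> hd xs = u \<and> last xs = v"
      using zs by blast
  qed
  have NC': "\<not> (\<exists>xs. is_graph_cycle (V - {x}) (E - {{x, y}}) xs)"
  proof
    assume "\<exists>xs. is_graph_cycle (V - {x}) (E - {{x, y}}) xs"
    then obtain xs where "is_graph_cycle (V - {x}) (E - {{x, y}}) xs" by blast
    then have "is_graph_cycle V E xs"
      unfolding is_graph_cycle_def is_walk_succ by (auto elim!: successively_mono)
    then show False using NC by blast
  qed
  have "y \<in> V - {x}" using x by auto
  then have "V - {x} \<noteq> {}" by blast
  then show ?thesis using G' C' NC' unfolding is_tree_def by blast
qed


lemma tree_rooted:
  assumes "is_tree V E"
  shows "\<exists>r par (depth :: 'a \<Rightarrow> nat). r \<in> V \<and> depth r = 0 \<and>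
           (\<forall>v\<in>V - {r}. par v \<in> V \<and> depth v = Suc (depth (par v))) \<and>
           E = (\<lambda>v. {v, par v}) ` (V - {r})"
  using assms
proof (induction "card V" arbitrary: V E rule: less_induct)
  case less
  have G: "is_graph V E" using less.prems unfolding is_tree_def by simp
  have fin: "finite V" using G unfolding is_graph_def by simp
  have ne: "V \<noteq> {}" using less.prems unfolding is_tree_def by simp
  show ?case
  proof (cases "card V \<ge> 2")
    case False
    moreover have "card V > 0" using fin ne by (simp add: card_gt_0_iff)
    ultimately have "card V = 1" by linarith
    then have "card V = Suc 0" by simp
    then obtain r where Vr: "V = {r}" unfolding card_1_singleton_iff by blast
    have "E = {}"
    proof (rule ccontr)
      assume "E \<noteq> {}"
      then obtain e where "e \<in> E" by blast
      then have "e \<subseteq> V" "card e = 2" using G unfolding is_graph_def by auto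
      moreover have "card e \<le> card V" using card_mono[OF fin calculation(1)] .
      ultimately show False using Vr by simp
    qed
    then show ?thesis using Vr by (intro exI[of _ r] exI[of _ id] exI[of _ "\<lambda>_. 0::nat"]) simp
  next
    case True
    obtain x y where xy: "x \<in> V" "y \<in> V" "x \<noteq> y" "{x, y} \<in> E" and uq: "\<forall>w. {w, x} \<in> E \<longrightarrow> w = y"
      using tree_leaf[OF less.prems True] by blast
    have T': "is_tree (V - {x}) (E - {{x, y}})" using tree_remove_leaf[OF less.prems xy uq] .
    have "card (V - {x}) < card V" using card_Diff1_less[OF fin xy(1)] .
    obtain r par and depth :: "'a \<Rightarrow> nat" where
      r: "r \<in> V - {x}" "depth r = 0"
      and pd: "\<forall>v\<in>V - {x} - {r}. par v \<in> V - {x} \<and> depth v = Suc (depth (par v))"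
      and E': "E - {{x, y}} = (\<lambda>v. {v, par v}) ` (V - {x} - {r})"
      using less.hyps[OF \<open>card (V - {x}) < card V\<close> T']
      apply (elim exE conjE)
      apply (rule that)
      apply assumption+
      done
    define par' where "par' = par(x := y)"
    define depth' where "depth' = depth(x := Suc (depth y))"
    have A: "r \<in> V" "depth' r = 0" using r by (auto simp: depth'_def)
    have B: "\<forall>v\<in>V - {r}. par' v \<in> V \<and> depth' v = Suc (depth' (par' v))"
    proof
      fix v assume v: "v \<in> V - {r}"
      show "par' v \<in> V \<and> depth' v = Suc (depth' (par' v))"
      proof (cases "v = x")
        case True
        then show ?thesis using xy by (simp add: par'_def depth'_def)
      next
        case False
        then have "v \<in> V - {x} - {r}" using v by auto
        then have "par v \<in> V - {x}" "depth v = Suc (depth (par v))" using pd by auto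
        then show ?thesis using False by (simp add: par'_def depth'_def)
      qed
    qed
    have C: "E = (\<lambda>v. {v, par' v}) ` (V - {r})"
    proof -
      have "E = insert {x, y} (E - {{x, y}})" using xy(4) by auto
      also have "\<dots> = insert {x, par' x} ((\<lambda>v. {v, par' v}) ` (V - {x} - {r}))"
      proof -
        have "(\<lambda>v. {v, par' v}) ` (V - {x} - {r}) = (\<lambda>v. {v, par v}) ` (V - {x} - {r})"
          by (rule image_cong) (auto simp: par'_def)
        then show ?thesis using E' by (simp add: par'_def)
      qed
      also have "\<dots> = (\<lambda>v. {v, par' v}) ` (V - {r})"
      proof -
        have "V - {r} = insert x (V - {x} - {r})" using xy(1) r(1) by auto
        then show ?thesis by simp
      qed
      finally show ?thesis .
    qed
    show ?thesis using A B C by blast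
  qed
qed

locale rtree =
  fixes V :: "'a set" and r :: 'a and par :: "'a \<Rightarrow> 'a" and depth :: "'a \<Rightarrow> nat" and \<Delta> :: nat
  assumes finV: "finite V" and rV: "r \<in> V" and dr: "depth r = 0"
    and parV: "\<And>v. v \<in> V \<Longrightarrow> v \<noteq> r \<Longrightarrow> par v \<in> V"
    and dpar: "\<And>v. v \<in> V \<Longrightarrow> v \<noteq> r \<Longrightarrow> depth v = Suc (depth (par v))"
    and chb: "\<And>v. v \<in> V \<Longrightarrow> card {c \<in> V. c \<noteq> r \<and> par c = v} \<le> \<Delta>"
begin

definition ch :: "'a \<Rightarrow> 'a set" where "ch v = {c \<in> V. c \<noteq> r \<and> par c = v}"

definition anc :: "nat \<Rightarrow> 'a \<Rightarrow> 'a" where "anc i v = (par ^^ i) v"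

definition sub :: "'a \<Rightarrow> 'a set" where
  "sub v = {w \<in> V. depth v \<le> depth w \<and> anc (depth w - depth v) w = v}"

lemma card_ch: "v \<in> V \<Longrightarrow> card (ch v) \<le> \<Delta>"
  using chb unfolding ch_def by blast

lemma fin_ch: "finite (ch v)"
  unfolding ch_def using finV by simp

lemma ch_V: "c \<in> ch v \<Longrightarrow> c \<in> V" and ch_nr: "c \<in> ch v \<Longrightarrow> c \<noteq> r"
  and ch_par: "c \<in> ch v \<Longrightarrow> par c = v"
  unfolding ch_def by auto

lemma ch_depth: "c \<in> ch v \<Longrightarrow> depth c = Suc (depth v)"
  unfolding ch_def using dpar by auto

lemma ch_I: "c \<in> V \<Longrightarrow> c \<noteq> r \<Longrightarrow> c \<in> ch (par c)"
  unfolding ch_def by auto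

lemma depth0: "v \<in> V \<Longrightarrow> depth v = 0 \<Longrightarrow> v = r"
  using dpar by fastforce

lemma anc_0[simp]: "anc 0 v = v" unfolding anc_def by simp

lemma anc_Suc: "anc (Suc i) v = par (anc i v)" unfolding anc_def by simp

lemma anc_Suc_right: "anc (Suc i) v = anc i (par v)" unfolding anc_def
  by (simp only: funpow_Suc_right comp_apply)

lemma anc_V: "v \<in> V \<Longrightarrow> i \<le> depth v \<Longrightarrow> anc i v \<in> V \<and> depth (anc i v) = depth v - i"
proof (induction i)
  case 0
  then show ?case by simp
next
  case (Suc i)
  then have IH: "anc i v \<in> V" "depth (anc i v) = depth v - i" by auto
  then have "anc i v \<noteq> r" using Suc.prems dr by auto
  then have "par (anc i v) \<in> V" "depth (anc i v) = Suc (depth (par (anc i v)))"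
    using parV dpar IH(1) by auto
  then show ?case using IH(2) by (simp add: anc_Suc)
qed

lemma anc_depth: "v \<in> V \<Longrightarrow> anc (depth v) v = r"
  using anc_V[of v "depth v"] depth0 by auto

lemma sub_self: "v \<in> V \<Longrightarrow> v \<in> sub v"
  unfolding sub_def by simp

lemma sub_V: "w \<in> sub v \<Longrightarrow> w \<in> V"
  unfolding sub_def by simp

lemma sub_depth: "w \<in> sub v \<Longrightarrow> depth v \<le> depth w"
  unfolding sub_def by simp

lemma sub_par:
  assumes "w \<in> sub c" "w \<noteq> c"
  shows "w \<noteq> r" "par w \<in> sub c"
proof -
  have w: "w \<in> V" "depth c \<le> depth w" "anc (depth w - depth c) w = c" using assms(1) unfolding sub_def by auto
  have "depth w \<noteq> depth c" using w assms(2) by auto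
  then have lt: "depth c < depth w" using w by simp
  then show "w \<noteq> r" using dr by auto
  then have pw: "par w \<in> V" "depth w = Suc (depth (par w))" using parV dpar w by auto
  have "depth w - depth c = Suc (depth (par w) - depth c)" using pw lt by simp
  then have "anc (depth (par w) - depth c) (par w) = c" using w(3) anc_Suc_right by metis
  then show "par w \<in> sub c" using pw lt unfolding sub_def by simp
qed

lemma sub_rec:
  assumes v: "v \<in> V"
  shows "sub v = insert v (\<Union>c\<in>ch v. sub c)"
proof
  show "sub v \<subseteq> insert v (\<Union>c\<in>ch v. sub c)"
  proof
    fix w assume w: "w \<in> sub v"
    show "w \<in> insert v (\<Union>c\<in>ch v. sub c)"
    proof (cases "w = v")
      case False
      have wv: "w \<in> V" "depth v \<le> depth w" "anc (depth w - depth v) w = v" using w unfolding sub_def by auto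
      then have lt: "depth v < depth w" using False by (metis anc_0 diff_is_0_eq le_neq_implies_less)
      define c where "c = anc (depth w - depth v - 1) w"
      have cV: "c \<in> V" "depth c = Suc (depth v)" using anc_V[OF wv(1), of "depth w - depth v - 1"] lt
        unfolding c_def by auto
      have "par c = v" using wv(3) lt unfolding c_def
        by (metis Suc_diff_1 anc_Suc zero_less_diff)
      then have "c \<in> ch v" using cV dr unfolding ch_def by auto
      moreover have "w \<in> sub c" unfolding sub_def using wv cV lt c_def
        by (simp add: Suc_le_eq)
      ultimately show ?thesis by blast
    qed simp
  qed
next
  show "insert v (\<Union>c\<in>ch v. sub c) \<subseteq> sub v"
  proof
    fix w assume w: "w \<in> insert v (\<Union>c\<in>ch v. sub c)"
    show "w \<in> sub v"
    proof (cases "w = v")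
      case True then show ?thesis using sub_self v by simp
    next
      case False
      then obtain c where c: "c \<in> ch v" "w \<in> sub c" using w by blast
      have wc: "w \<in> V" "depth c \<le> depth w" "anc (depth w - depth c) w = c" using c(2) unfolding sub_def by auto
      have dc: "depth c = Suc (depth v)" using ch_depth c(1) .
      have "depth w - depth v = Suc (depth w - depth c)" using dc wc(2) by simp
      then have "anc (depth w - depth v) w = par c" using wc(3) anc_Suc by simp
      then show ?thesis using ch_par[OF c(1)] wc dc unfolding sub_def by simp
    qed
  qed
qed

lemma sub_ch_disj:
  assumes "c \<in> ch v" "c' \<in> ch v" "c \<noteq> c'"
  shows "sub c \<inter> sub c' = {}"
proof (rule ccontr)
  assume "sub c \<inter> sub c' \<noteq> {}"
  then obtain w where w: "w \<in> sub c" "w \<in> sub c'" by blast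
  have "depth c = depth c'" using ch_depth assms by simp
  then show False using w assms(3) unfolding sub_def by auto
qed

lemma notin_sub_ch: "c \<in> ch v \<Longrightarrow> v \<notin> sub c"
  using ch_depth sub_depth by fastforce

lemma fin_sub: "finite (sub v)"
  using finV unfolding sub_def by simp

lemma card_sub: "v \<in> V \<Longrightarrow> card (sub v) = Suc (\<Sum>c\<in>ch v. card (sub c))"
proof -
  assume v: "v \<in> V"
  have "card (\<Union>c\<in>ch v. sub c) = (\<Sum>c\<in>ch v. card (sub c))"
    by (rule card_UN_disjoint) (use fin_ch fin_sub sub_ch_disj in auto)
  moreover have "v \<notin> (\<Union>c\<in>ch v. sub c)" using notin_sub_ch by blast
  ultimately show ?thesis using sub_rec[OF v] fin_sub
    by (metis card_insert_disjoint finite_UN_I fin_ch)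
qed

lemma tree_induct[consumes 1]:
  assumes vV: "v \<in> V" and step: "\<And>v. v \<in> V \<Longrightarrow> (\<And>c. c \<in> ch v \<Longrightarrow> P c) \<Longrightarrow> P v"
  shows "P v"
proof -
  define M where "M = Max (depth ` V)"
  have dM: "w \<in> V \<Longrightarrow> depth w \<le> M" for w unfolding M_def using finV by simp
  have "\<forall>w\<in>V. M - depth w \<le> i \<longrightarrow> P w" for i
  proof (induction i)
    case 0
    show ?case
    proof (intro ballI impI)
      fix w assume w: "w \<in> V" "M - depth w \<le> 0"
      show "P w"
      proof (rule step[OF w(1)])
        fix c assume c: "c \<in> ch w"
        then have "depth c \<le> M" using dM ch_V by blast
        then show "P c" using w ch_depth[OF c] by simp
      qed
    qed
  next
    case (Suc i)
    show ?case
    proof (intro ballI impI)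
      fix w assume w: "w \<in> V" "M - depth w \<le> Suc i"
      show "P w"
      proof (rule step[OF w(1)])
        fix c assume c: "c \<in> ch w"
        then have "M - depth c \<le> i" using w ch_depth[OF c] by simp
        then show "P c" using Suc.IH ch_V[OF c] by blast
      qed
    qed
  qed
  then show "P v" using vV by blast
qed

lemma depth_induct[consumes 1]:
  assumes vV: "v \<in> V" and step: "\<And>v. v \<in> V \<Longrightarrow> (v \<noteq> r \<Longrightarrow> P (par v)) \<Longrightarrow> P v"
  shows "P v"
proof -
  have "\<forall>w\<in>V. depth w = d \<longrightarrow> P w" for d
  proof (induction d)
    case 0
    then show ?case using step depth0 by blast
  next
    case (Suc d)
    show ?case
    proof (intro ballI impI)
      fix w assume w: "w \<in> V" "depth w = Suc d"
      show "P w"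
      proof (rule step[OF w(1)])
        assume "w \<noteq> r"
        then show "P (par w)" using Suc.IH parV dpar w by auto
      qed
    qed
  qed
  then show "P v" using vV by blast
qed

end

locale rpiece = rtree +
  fixes K :: "'a set"
  assumes KV: "K \<subseteq> V" and rK: "r \<in> K"
begin

definition pd :: "'a \<Rightarrow> nat" where "pd w = (LEAST i. anc i w \<in> K)"
definition top :: "'a \<Rightarrow> 'a" where "top w = anc (pd w) w"

lemma pd_ex: "w \<in> V \<Longrightarrow> anc (depth w) w \<in> K"
  using anc_depth rK by simp

lemma pd_le: "w \<in> V \<Longrightarrow> pd w \<le> depth w"
  unfolding pd_def using pd_ex by (simp add: Least_le)

lemma top_K: "w \<in> V \<Longrightarrow> top w \<in> K"
  unfolding top_def pd_def using pd_ex by (rule LeastI)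

lemma top_V: "w \<in> V \<Longrightarrow> top w \<in> V"
  using top_K KV by blast

lemma pd_K: "w \<in> K \<Longrightarrow> pd w = 0"
  unfolding pd_def by simp

lemma top_Kself: "w \<in> K \<Longrightarrow> top w = w"
  unfolding top_def using pd_K by simp

lemma pd_nK:
  assumes w: "w \<in> V" "w \<notin> K"
  shows "w \<noteq> r" "pd w = Suc (pd (par w))" "top w = top (par w)" "par w \<in> V"
proof -
  show wr: "w \<noteq> r" using w rK by blast
  show pw: "par w \<in> V" using parV w wr by blast
  have "(LEAST i. anc i w \<in> K) = Suc (LEAST m. anc (Suc m) w \<in> K)"
    by (rule Least_Suc[of "\<lambda>i. anc i w \<in> K" "depth w", OF pd_ex[OF w(1)]]) (use w in simp)
  then show pdw: "pd w = Suc (pd (par w))" unfolding pd_def by (simp add: anc_Suc_right)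
  show "top w = top (par w)" unfolding top_def pdw by (simp add: anc_Suc_right)
qed

lemma pd_depth: "w \<in> V \<Longrightarrow> depth (top w) + pd w = depth w"
  unfolding top_def using anc_V pd_le by simp

lemma in_sub_top: "w \<in> V \<Longrightarrow> w \<in> sub (top w)"
proof (induction w rule: depth_induct)
  case (1 v)
  show ?case
  proof (cases "v \<in> K")
    case True
    then show ?thesis using top_Kself sub_self 1 by simp
  next
    case False
    note h = pd_nK[OF 1(1) False]
    have "par v \<in> sub (top v)" using 1 h by simp
    then have pv: "depth (top v) \<le> depth (par v)" "anc (depth (par v) - depth (top v)) (par v) = top v"
      unfolding sub_def by auto
    have "depth v = Suc (depth (par v))" using dpar 1 h by simp
    then have "depth v - depth (top v) = Suc (depth (par v) - depth (top v))" using pv by simp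
    then have "anc (depth v - depth (top v)) v = top v" using pv anc_Suc_right by metis
    then show ?thesis unfolding sub_def using 1 pv \<open>depth v = _\<close> by simp
  qed
qed

lemma top_sub_cases:
  assumes "w \<in> sub c"
  shows "top w = top c \<or> top w \<in> sub c"
proof -
  have "\<forall>c. w \<in> sub c \<longrightarrow> top w = top c \<or> top w \<in> sub c" if "w \<in> V" for w
    using that
  proof (induction w rule: depth_induct)
    case (1 v)
    show ?case
    proof (intro allI impI)
      fix c assume vc: "v \<in> sub c"
      show "top v = top c \<or> top v \<in> sub c"
      proof (cases "v = c")
        case False
        note sp = sub_par[OF vc False]
        show ?thesis
        proof (cases "v \<in> K")
          case True
          then show ?thesis using vc top_Kself by simp
        next
          case False
          then have "top v = top (par v)" using pd_nK 1 by blast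
          then show ?thesis using 1(2)[OF sp(1)] sp(2) by simp
        qed
      qed simp
    qed
  qed
  then show ?thesis using assms sub_V by blast
qed

definition piece :: "'a \<Rightarrow> 'a set" where "piece t = {w \<in> V. top w = t}"
definition layer :: "'a \<Rightarrow> nat \<Rightarrow> 'a set" where "layer t d = {w \<in> V. top w = t \<and> pd w = d}"

lemma layer_card: "card (layer t d) \<le> \<Delta> ^ d"
proof (induction d)
  case 0
  have "layer t 0 \<subseteq> {t}"
    unfolding layer_def top_def by auto
  then have "card (layer t 0) \<le> card {t}" by (intro card_mono) auto
  then show ?case by simp
next
  case (Suc d)
  have "layer t (Suc d) \<subseteq> (\<Union>u\<in>layer t d. ch u)"
  proof
    fix w assume w: "w \<in> layer t (Suc d)"
    then have wV: "w \<in> V" "top w = t" "pd w = Suc d" unfolding layer_def by auto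
    then have wK: "w \<notin> K" using pd_K by force
    note h = pd_nK[OF wV(1) wK]
    then have "par w \<in> layer t d" using wV unfolding layer_def by simp
    moreover have "w \<in> ch (par w)" using ch_I wV h by blast
    ultimately show "w \<in> (\<Union>u\<in>layer t d. ch u)" by blast
  qed
  moreover have "finite (layer t d)" unfolding layer_def using finV by simp
  ultimately have "card (layer t (Suc d)) \<le> card (\<Union>u\<in>layer t d. ch u)"
    by (intro card_mono) (auto simp: fin_ch)
  also have "\<dots> \<le> (\<Sum>u\<in>layer t d. card (ch u))"
    using card_UN_le \<open>finite (layer t d)\<close> by blast
  also have "\<dots> \<le> (\<Sum>u\<in>layer t d. \<Delta>)"
    by (rule sum_mono) (use card_ch layer_def in auto)
  also have "\<dots> = card (layer t d) * \<Delta>" by simp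
  also have "\<dots> \<le> \<Delta> ^ d * \<Delta>" using Suc.IH by simp
  finally show ?case by (simp add: mult.commute)
qed

end

context rtree
begin

lemma sub_r: "sub r = V"
  unfolding sub_def using anc_depth dr by auto

definition q :: "nat \<Rightarrow> 'a \<Rightarrow> nat" where "q s v = card (sub v) div s"

definition Kc :: "nat \<Rightarrow> 'a set" where
  "Kc s = {v \<in> V. v = r \<or> (\<Sum>c\<in>ch v. q s c) < q s v}"

lemma q_super:
  assumes v: "v \<in> V" and s: "s > 0"
  shows "(\<Sum>c\<in>ch v. q s c) \<le> q s v"
proof -
  have "(\<Sum>c\<in>ch v. q s c) * s = (\<Sum>c\<in>ch v. q s c * s)" by (simp add: sum_distrib_right)
  also have "\<dots> \<le> (\<Sum>c\<in>ch v. card (sub c))"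
    by (rule sum_mono) (simp add: q_def)
  also have "\<dots> \<le> card (sub v)" using card_sub[OF v] by simp
  finally show ?thesis unfolding q_def using less_eq_div_iff_mult_less_eq[OF s] by blast
qed

lemma sum_ch_eq:
  "(\<Sum>v\<in>V. \<Sum>c\<in>ch v. f c) = (\<Sum>c\<in>V - {r}. (f c :: nat))"
proof -
  have "(\<Sum>v\<in>V. \<Sum>c\<in>{x. x \<in> V - {r} \<and> par x = v}. f c) = (\<Sum>c\<in>V - {r}. f c)"
    by (rule sum.group) (use finV parV in auto)
  moreover have "{x. x \<in> V - {r} \<and> par x = v} = ch v" for v unfolding ch_def by auto
  ultimately show ?thesis by simp
qed

lemma card_Kc:
  assumes s: "s > 0"
  shows "card (Kc s - {r}) \<le> card V div s"
proof -
  define g where "g v = q s v - (\<Sum>c\<in>ch v. q s c)" for v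
  have gq: "v \<in> V \<Longrightarrow> g v + (\<Sum>c\<in>ch v. q s c) = q s v" for v
    using q_super[OF _ s] unfolding g_def by simp
  have "(\<Sum>v\<in>V. g v) + (\<Sum>v\<in>V. \<Sum>c\<in>ch v. q s c) = (\<Sum>v\<in>V. q s v)"
    using gq by (simp add: sum.distrib[symmetric])
  also have "\<dots> = q s r + (\<Sum>v\<in>V - {r}. q s v)"
    using finV rV by (simp add: sum.remove)
  finally have sg: "(\<Sum>v\<in>V. g v) = q s r" using sum_ch_eq[of "q s"] by simp
  have "card (Kc s - {r}) = (\<Sum>v\<in>Kc s - {r}. 1)" by simp
  also have "\<dots> \<le> (\<Sum>v\<in>Kc s - {r}. g v)"
    by (rule sum_mono) (auto simp: Kc_def g_def)
  also have "\<dots> \<le> (\<Sum>v\<in>V. g v)"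
    by (rule sum_mono2) (use finV in \<open>auto simp: Kc_def\<close>)
  finally show ?thesis using sg sub_r unfolding q_def by simp
qed

lemma Kc_V: "Kc s \<subseteq> V" and r_Kc: "r \<in> Kc s"
  unfolding Kc_def using rV by auto

end

locale rcut = rtree +
  fixes s :: nat
  assumes spos: "s > 0"
begin

sublocale rpiece V r par depth \<Delta> "Kc s"
  by unfold_locales (auto simp: Kc_V r_Kc)

definition part :: "'a \<Rightarrow> 'a set" where "part u = {w \<in> sub u. top w = top u}"

lemma part_rec:
  assumes u: "u \<in> V"
  shows "part u = insert u (\<Union>c\<in>ch u - Kc s. part c)"
proof
  show "part u \<subseteq> insert u (\<Union>c\<in>ch u - Kc s. part c)"
  proof
    fix w assume w: "w \<in> part u"
    then have ws: "w \<in> sub u" "top w = top u" unfolding part_def by auto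
    show "w \<in> insert u (\<Union>c\<in>ch u - Kc s. part c)"
    proof (cases "w = u")
      case False
      then obtain c where c: "c \<in> ch u" "w \<in> sub c" using ws sub_rec[OF u] by blast
      have cV: "c \<in> V" using ch_V c by simp
      have "c \<notin> Kc s"
      proof
        assume cK: "c \<in> Kc s"
        have "top w = top c \<or> top w \<in> sub c" using top_sub_cases[OF c(2)] .
        then have "depth c \<le> depth (top w)" using top_Kself[OF cK] sub_depth by auto
        moreover have "depth (top u) \<le> depth u" using pd_depth[OF u] by simp
        ultimately show False using ws(2) ch_depth[OF c(1)] by simp
      qed
      moreover have "top c = top u"
        using pd_nK[OF cV \<open>c \<notin> Kc s\<close>] ch_par[OF c(1)] by simp
      ultimately show ?thesis using c ws unfolding part_def by auto
    qed simp
  qed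
next
  show "insert u (\<Union>c\<in>ch u - Kc s. part c) \<subseteq> part u"
  proof
    fix w assume w: "w \<in> insert u (\<Union>c\<in>ch u - Kc s. part c)"
    show "w \<in> part u"
    proof (cases "w = u")
      case True then show ?thesis using sub_self u unfolding part_def by simp
    next
      case False
      then obtain c where c: "c \<in> ch u" "c \<notin> Kc s" "w \<in> part c" using w by blast
      have cV: "c \<in> V" using ch_V c by simp
      have "top c = top u" using pd_nK[OF cV c(2)] ch_par[OF c(1)] by simp
      moreover have "w \<in> sub u" using c(3) sub_rec[OF u] c(1) unfolding part_def by auto
      ultimately show ?thesis using c(3) unfolding part_def by simp
    qed
  qed
qed

lemma fin_part: "finite (part u)"
  unfolding part_def using fin_sub by simp

lemma card_part_rec:
  assumes u: "u \<in> V"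
  shows "card (part u) \<le> Suc (\<Sum>c\<in>ch u - Kc s. card (part c))"
proof -
  have "card (part u) \<le> Suc (card (\<Union>c\<in>ch u - Kc s. part c))"
    unfolding part_rec[OF u] by (rule card_insert_le_m1) (simp_all add: fin_part fin_ch)
  also have "card (\<Union>c\<in>ch u - Kc s. part c) \<le> (\<Sum>c\<in>ch u - Kc s. card (part c))"
    by (rule card_UN_le) (simp add: fin_ch)
  finally show ?thesis by simp
qed

lemma part_bound:
  assumes u: "u \<in> V"
  shows "u \<notin> Kc s \<Longrightarrow> s * q s u + card (part u) \<le> card (sub u)"
  using u
proof (induction u rule: tree_induct)
  case (1 v)
  have nK: "\<not> (\<Sum>c\<in>ch v. q s c) < q s v" using 1 unfolding Kc_def by auto
  have sq: "s * q s c \<le> card (sub c)" for c unfolding q_def by (simp add: mult.commute)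
  have "s * q s v + card (part v) \<le> s * (\<Sum>c\<in>ch v. q s c) + Suc (\<Sum>c\<in>ch v - Kc s. card (part c))"
  proof -
    have "q s v \<le> (\<Sum>c\<in>ch v. q s c)" using nK by simp
    then have "s * q s v \<le> s * (\<Sum>c\<in>ch v. q s c)" by simp
    then show ?thesis using card_part_rec[OF 1(1)] by linarith
  qed
  also have "s * (\<Sum>c\<in>ch v. q s c) = (\<Sum>c\<in>ch v \<inter> Kc s. s * q s c) + (\<Sum>c\<in>ch v - Kc s. s * q s c)"
    by (simp add: sum_distrib_left sum.Int_Diff[OF fin_ch])
  also have "(\<Sum>c\<in>ch v \<inter> Kc s. s * q s c) + (\<Sum>c\<in>ch v - Kc s. s * q s c) + Suc (\<Sum>c\<in>ch v - Kc s. card (part c))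
      = Suc ((\<Sum>c\<in>ch v \<inter> Kc s. s * q s c) + (\<Sum>c\<in>ch v - Kc s. s * q s c + card (part c)))"
    by (simp add: sum.distrib)
  also have "\<dots> \<le> Suc ((\<Sum>c\<in>ch v \<inter> Kc s. card (sub c)) + (\<Sum>c\<in>ch v - Kc s. card (sub c)))"
  proof -
    have "(\<Sum>c\<in>ch v \<inter> Kc s. s * q s c) \<le> (\<Sum>c\<in>ch v \<inter> Kc s. card (sub c))"
      by (rule sum_mono) (rule sq)
    moreover have "(\<Sum>c\<in>ch v - Kc s. s * q s c + card (part c)) \<le> (\<Sum>c\<in>ch v - Kc s. card (sub c))"
      by (rule sum_mono) (use 1(2) ch_V in blast)
    ultimately show ?thesis by simp
  qed
  also have "\<dots> = card (sub v)"
    using card_sub[OF 1(1)] by (simp add: sum.Int_Diff[OF fin_ch, symmetric])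
  finally show ?case .
qed

lemma part_small:
  assumes u: "u \<in> V" "u \<notin> Kc s"
  shows "card (part u) < s"
proof -
  have "s * q s u + card (part u) \<le> card (sub u)" using part_bound u by blast
  moreover have "card (sub u) = s * q s u + card (sub u) mod s" unfolding q_def by simp
  moreover have "card (sub u) mod s < s" using spos by simp
  ultimately show ?thesis by linarith
qed

lemma piece_part: "t \<in> Kc s \<Longrightarrow> piece t = part t"
  unfolding piece_def part_def using in_sub_top top_Kself sub_V by auto

lemma piece_small:
  assumes t: "t \<in> Kc s"
  shows "card (piece t) \<le> 1 + \<Delta> * (s - 1)"
proof -
  have tV: "t \<in> V" using t Kc_V by blast
  have "card (piece t) \<le> Suc (\<Sum>c\<in>ch t - Kc s. card (part c))"
    using piece_part[OF t] card_part_rec[OF tV] by simp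
  also have "(\<Sum>c\<in>ch t - Kc s. card (part c)) \<le> (\<Sum>c\<in>ch t - Kc s. s - 1)"
    by (rule sum_mono) (use part_small ch_V in \<open>fastforce\<close>)
  also have "\<dots> = card (ch t - Kc s) * (s - 1)" by simp
  also have "\<dots> \<le> \<Delta> * (s - 1)"
    using card_ch[OF tV] card_mono[OF fin_ch, of "ch t - Kc s" t] by (intro mult_right_mono) auto
  finally show ?thesis by simp
qed

end

definition Wq :: "nat \<Rightarrow> nat \<Rightarrow> nat \<Rightarrow> nat" where
  "Wq l \<tau> t = (((\<tau> + l - t) mod l) * ((l + 1) div 2)) mod l"

definition W :: "nat \<Rightarrow> nat \<Rightarrow> nat \<Rightarrow> nat \<Rightarrow> nat" where
  "W l \<tau> t d = (if l \<le> d then (\<tau> + d) mod l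
     else if d \<le> Wq l \<tau> t then (t + d) mod l else (t + 2 * Wq l \<tau> t + l - d) mod l)"

definition adj :: "nat \<Rightarrow> nat \<Rightarrow> nat \<Rightarrow> bool" where
  "adj l a b \<longleftrightarrow> b = (a + 1) mod l \<or> a = (b + 1) mod l"

lemma W_lt: "l > 0 \<Longrightarrow> W l \<tau> t d < l"
  unfolding W_def by auto

lemma W_0: "t < l \<Longrightarrow> W l \<tau> t 0 = t"
  unfolding W_def by auto

lemma W_far: "l \<le> d \<Longrightarrow> W l \<tau> t d = (\<tau> + d) mod l"
  unfolding W_def by auto

lemma Wq_lt: "l > 0 \<Longrightarrow> Wq l \<tau> t < l"
  unfolding Wq_def by auto

lemma Wq_key:
  assumes l: "odd l" and t: "t < l" and tau: "\<tau> < l"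
  shows "(t + 2 * Wq l \<tau> t) mod l = \<tau>"
proof -
  define \<delta> where "\<delta> = (\<tau> + l - t) mod l"
  define h where "h = (l + 1) div 2"
  have h2: "2 * h = l + 1" using l unfolding h_def by simp
  have lpos: "l > 0" using t by simp
  have "(2 * Wq l \<tau> t) mod l = (2 * (\<delta> * h)) mod l"
    unfolding Wq_def \<delta>_def h_def by (simp add: mod_mult_right_eq)
  also have "2 * (\<delta> * h) = \<delta> * l + \<delta>" using h2
    by (metis add.commute distrib_left mult.commute mult.left_commute mult_1_right)
  also have "(\<delta> * l + \<delta>) mod l = \<delta>" unfolding \<delta>_def by simp
  finally have "(2 * Wq l \<tau> t) mod l = \<delta>" .
  then have "(t + 2 * Wq l \<tau> t) mod l = (t + \<delta>) mod l" by (metis mod_add_right_eq)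
  also have "\<dots> = (t + (\<tau> + l - t)) mod l" unfolding \<delta>_def by (simp add: mod_add_right_eq)
  also have "t + (\<tau> + l - t) = \<tau> + l" using t by simp
  also have "(\<tau> + l) mod l = \<tau>" using tau by simp
  finally show ?thesis .
qed

lemma mod_suc_l: "((x mod l) + 1) mod l = (x + 1) mod (l::nat)"
  by (metis Suc_eq_plus1 mod_Suc_eq)

lemma W_step:
  assumes l: "odd l" "l \<ge> 3" and t: "t < l" and tau: "\<tau> < l"
  shows "adj l (W l \<tau> t d) (W l \<tau> t (Suc d))"
proof -
  define q where "q = Wq l \<tau> t"
  have ql: "q < l" unfolding q_def using Wq_lt l by simp
  have key: "(t + 2 * q) mod l = \<tau>" unfolding q_def using Wq_key l t tau by simp
  consider "l \<le> d" | "Suc d = l" | "Suc d < l" by linarith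
  then show ?thesis
  proof cases
    case 1
    then show ?thesis unfolding adj_def W_def by (simp add: mod_Suc_eq)
  next
    case 2
    have b: "W l \<tau> t (Suc d) = \<tau>" unfolding W_def using 2 tau by simp
    have a: "W l \<tau> t d = (\<tau> + 1) mod l"
    proof (cases "d \<le> q")
      case True
      then have dq: "q = d" using ql 2 by simp
      have "W l \<tau> t d = (t + d) mod l" unfolding W_def using 2 True q_def by simp
      also have "t + d + l = (t + 2 * q) + 1" using dq 2 by simp
      then have "(t + d) mod l = ((t + 2 * q) + 1) mod l" by (metis mod_add_self2)
      also have "\<dots> = (\<tau> + 1) mod l" using key mod_suc_l by metis
      finally show ?thesis .
    next
      case False
      have "W l \<tau> t d = (t + 2 * q + l - d) mod l" unfolding W_def using 2 False q_def by simp
      also have "t + 2 * q + l - d = t + 2 * q + 1" using 2 by simp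
      also have "(t + 2 * q + 1) mod l = (\<tau> + 1) mod l" using key mod_suc_l by metis
      finally show ?thesis .
    qed
    show ?thesis unfolding adj_def using a b by simp
  next
    case 3
    show ?thesis
    proof (cases "Suc d \<le> q")
      case True
      then show ?thesis unfolding adj_def W_def using 3 q_def by (simp add: mod_Suc_eq)
    next
      case False
      note F = False
      show ?thesis
      proof (cases "d \<le> q")
        case True
        then have dq: "d = q" using False by simp
        have a: "W l \<tau> t d = (t + q) mod l" unfolding W_def using 3 True q_def dq by simp
        have b: "W l \<tau> t (Suc d) = (t + q + l - 1) mod l" unfolding W_def using 3 F dq q_def
          by (simp add: mult_2 add.assoc)
        have "(t + q + l - 1 + 1) mod l = (t + q) mod l" using 3 by simp
        then have "W l \<tau> t d = (W l \<tau> t (Suc d) + 1) mod l" using a b mod_suc_l by metis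
        then show ?thesis unfolding adj_def by simp
      next
        case False
        have a: "W l \<tau> t d = (t + 2 * q + l - d) mod l" unfolding W_def using 3 False q_def by simp
        have b: "W l \<tau> t (Suc d) = (t + 2 * q + l - Suc d) mod l" unfolding W_def using 3 F q_def by simp
        have "t + 2 * q + l - Suc d + 1 = t + 2 * q + l - d" using 3 by simp
        then have "W l \<tau> t d = (W l \<tau> t (Suc d) + 1) mod l" using a b mod_suc_l by metis
        then show ?thesis unfolding adj_def by simp
      qed
    qed
  qed
qed

locale rpos = rcut +
  fixes l :: nat and \<tau> :: "'a \<Rightarrow> nat"
  assumes lodd: "odd l" and l3: "l \<ge> 3" and tau_lt: "\<And>t. \<tau> t < l"
begin

primrec ptr :: "nat \<Rightarrow> 'a \<Rightarrow> nat" where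
  "ptr 0 w = 0"
| "ptr (Suc d) w = (if w \<in> Kc s then (W l (\<tau> (top (par w))) (ptr d (par w)) (pd (par w)) + 1) mod l
                    else ptr d (par w))"

definition postop :: "'a \<Rightarrow> nat" where "postop w = ptr (depth w) w"

definition pos :: "'a \<Rightarrow> nat" where "pos w = W l (\<tau> (top w)) (postop w) (pd w)"

lemma lpos: "l > 0" using l3 by simp

lemma ptr_lt: "ptr d w < l"
  by (induction d arbitrary: w) (auto simp: lpos)

lemma postop_lt: "postop w < l" unfolding postop_def by (rule ptr_lt)

lemma pos_lt: "pos w < l" unfolding pos_def using W_lt lpos by simp

lemma postop_K:
  assumes w: "w \<in> V" "w \<in> Kc s" "w \<noteq> r"
  shows "postop w = (pos (par w) + 1) mod l"
proof -
  have "depth w = Suc (depth (par w))" using dpar w by simp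
  then show ?thesis unfolding postop_def pos_def using w by simp
qed

lemma postop_nK:
  assumes w: "w \<in> V" "w \<notin> Kc s"
  shows "postop w = postop (par w)"
proof -
  have "w \<noteq> r" using pd_nK w by blast
  then have "depth w = Suc (depth (par w))" using dpar w by simp
  then show ?thesis unfolding postop_def using w by simp
qed

lemma pos_K: "w \<in> Kc s \<Longrightarrow> pos w = postop w"
  unfolding pos_def using pd_K W_0 postop_lt by simp

lemma pos_adj:
  assumes w: "w \<in> V" "w \<noteq> r"
  shows "adj l (pos (par w)) (pos w)"
proof (cases "w \<in> Kc s")
  case True
  then show ?thesis using postop_K[OF w(1) True w(2)] pos_K[OF True] unfolding adj_def by simp
next
  case False
  note h = pd_nK[OF w(1) False]
  have "pos w = W l (\<tau> (top (par w))) (postop (par w)) (Suc (pd (par w)))"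
    unfolding pos_def using h postop_nK[OF w(1) False] by simp
  then show ?thesis unfolding pos_def using W_step[OF lodd l3 postop_lt tau_lt] by simp
qed

lemma pos_far:
  assumes "l \<le> pd w"
  shows "pos w = (\<tau> (top w) + pd w) mod l"
  unfolding pos_def using W_far assms by simp

definition lo :: "'a \<Rightarrow> nat" where
  "lo w = (if pos w = (pos (par w) + 1) mod l then pos (par w) else pos w)"

definition cedge :: "nat \<Rightarrow> nat set" where "cedge j = {j, Suc j mod l}"

lemma lo_lt: "lo w < l" unfolding lo_def using pos_lt by simp

lemma edge_cedge:
  assumes w: "w \<in> V" "w \<noteq> r"
  shows "{pos w, pos (par w)} = cedge (lo w)"
proof (cases "pos w = (pos (par w) + 1) mod l")
  case True
  then show ?thesis unfolding lo_def cedge_def by auto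
next
  case False
  then have "pos (par w) = (pos w + 1) mod l" using pos_adj[OF w] unfolding adj_def by auto
  then show ?thesis using False unfolding lo_def cedge_def by auto
qed

lemma lo_far:
  assumes w: "w \<in> V" and pw: "l < pd w"
  shows "lo w = (\<tau> (top w) + (pd w - 1)) mod l"
proof -
  have wK: "w \<notin> Kc s" using pw pd_K by fastforce
  note h = pd_nK[OF w wK]
  have pp: "pos (par w) = (\<tau> (top w) + (pd w - 1)) mod l"
    using pos_far[of "par w"] h pw by simp
  have "pos w = (\<tau> (top w) + pd w) mod l" using pos_far pw by simp
  also have "\<dots> = ((\<tau> (top w) + (pd w - 1)) mod l + 1) mod l"
    using pw mod_suc_l[of "\<tau> (top w) + (pd w - 1)" l] by simp
  finally have "pos w = (pos (par w) + 1) mod l" using pp by simp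
  then show ?thesis unfolding lo_def using pp by simp
qed

end

lemma rot_inj:
  assumes "j < l" 
  shows "inj_on (\<lambda>c. (j + l - c) mod l) {..<(l::nat)}"
proof (rule inj_onI)
  fix c c' assume c: "c \<in> {..<l}" "c' \<in> {..<l}" and e: "(j + l - c) mod l = (j + l - c') mod l"
  have main: "c = c'" if "c \<le> c'" "c < l" "c' < l" "(j + l - c) mod l = (j + l - c') mod l" for c c'
  proof -
    have "l dvd (j + l - c) - (j + l - c')"
      using that mod_eq_dvd_iff_nat[of "j + l - c'" "j + l - c" l] by simp
    moreover have "(j + l - c) - (j + l - c') = c' - c" using that by simp
    moreover have "c' - c < l" using that by simp
    ultimately have "c' - c = 0" by (metis dvd_imp_le linorder_not_le neq0_conv)
    then show ?thesis using that by simp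
  qed
  show "c = c'"
  proof (cases "c \<le> c'")
    case True then show ?thesis using main c e by simp
  next
    case False then show ?thesis using main[of c' c] c e by simp
  qed
qed

lemma rot_sum:
  assumes "j < l"
  shows "(\<Sum>c<l. g ((j + l - c) mod l)) = (\<Sum>i<(l::nat). (g i :: real))"
proof -
  have inj: "inj_on (\<lambda>c. (j + l - c) mod l) {..<l}" using rot_inj assms by blast
  have "(\<lambda>c. (j + l - c) mod l) ` {..<l} = {..<l}"
    by (rule endo_inj_surj) (use inj assms in auto)
  then show ?thesis using sum.reindex[OF inj, of g] by simp
qed

lemma exists_below_avg:
  fixes f :: "nat \<Rightarrow> real"
  assumes "l > 0" "(\<Sum>c<l. f c) \<le> real l * M"
  shows "\<exists>c<l. f c \<le> M"
proof (rule ccontr)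
  assume "\<not> (\<exists>c<l. f c \<le> M)"
  then have "\<forall>c\<in>{..<l}. M < f c" by auto
  then have "(\<Sum>c<l. M) < (\<Sum>c<l. f c)" using assms(1) by (intro sum_strict_mono) auto
  then show False using assms(2) by simp
qed

lemma greedy:
  fixes z :: "'k \<Rightarrow> bool \<Rightarrow> nat \<Rightarrow> real"
  assumes fin: "finite K" and l: "l > 0" and zs: "\<And>t b. t \<in> K \<Longrightarrow> (\<Sum>j<l. z t b j) = 0"
  shows "\<exists>\<tau>. (\<forall>t. \<tau> t < l) \<and>
    (\<Sum>b\<in>UNIV. \<Sum>j<l. (\<Sum>t\<in>K. z t b ((j + l - \<tau> t) mod l))\<^sup>2)
      \<le> (\<Sum>t\<in>K. \<Sum>b\<in>UNIV. \<Sum>j<l. (z t b j)\<^sup>2)"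
  using fin zs
proof (induction K rule: finite_induct)
  case empty
  show ?case by (intro exI[of _ "\<lambda>_. 0"]) (simp add: l)
next
  case (insert x F)
  obtain \<tau>0 where t0: "\<forall>t. \<tau>0 t < l"
    and b0: "(\<Sum>b\<in>UNIV. \<Sum>j<l. (\<Sum>t\<in>F. z t b ((j + l - \<tau>0 t) mod l))\<^sup>2)
      \<le> (\<Sum>t\<in>F. \<Sum>b\<in>UNIV. \<Sum>j<l. (z t b j)\<^sup>2)"
    using insert.IH insert.prems by blast
  define D where "D b j = (\<Sum>t\<in>F. z t b ((j + l - \<tau>0 t) mod l))" for b j
  define R where "R c b j = z x b ((j + l - c) mod l)" for c b j
  define f where "f c = (\<Sum>b\<in>UNIV. \<Sum>j<l. (D b j + R c b j)\<^sup>2)" for c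
  define SD where "SD = (\<Sum>b\<in>(UNIV::bool set). \<Sum>j<l. (D b j)\<^sup>2)"
  define SZ where "SZ = (\<Sum>b\<in>(UNIV::bool set). \<Sum>j<l. (z x b j)\<^sup>2)"
  have zx: "(\<Sum>j<l. z x b j) = 0" for b using insert.prems by simp
  have fc: "f c = SD + 2 * (\<Sum>b\<in>UNIV. \<Sum>j<l. D b j * R c b j) + (\<Sum>b\<in>UNIV. \<Sum>j<l. (R c b j)\<^sup>2)" for c
  proof -
    have pt: "(D b j + R c b j)\<^sup>2 = (D b j)\<^sup>2 + 2 * (D b j * R c b j) + (R c b j)\<^sup>2" for b j
      by (simp add: power2_sum)
    have inner: "(\<Sum>j<l. (D b j + R c b j)\<^sup>2) = (\<Sum>j<l. (D b j)\<^sup>2) + 2 * (\<Sum>j<l. D b j * R c b j) + (\<Sum>j<l. (R c b j)\<^sup>2)" for b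
      by (simp only: pt sum.distrib sum_distrib_left)
    show ?thesis unfolding f_def SD_def inner by (simp only: sum.distrib sum_distrib_left)
  qed
  have s1: "(\<Sum>c<l. \<Sum>b\<in>UNIV. \<Sum>j<l. D b j * R c b j) = 0"
  proof -
    have "(\<Sum>c<l. \<Sum>b\<in>UNIV. \<Sum>j<l. D b j * R c b j) = (\<Sum>b\<in>UNIV. \<Sum>c<l. \<Sum>j<l. D b j * R c b j)"
      by (rule sum.swap)
    also have "\<dots> = (\<Sum>b\<in>UNIV. \<Sum>j<l. \<Sum>c<l. D b j * R c b j)"
      by (rule sum.cong[OF refl], rule sum.swap)
    also have "\<dots> = (\<Sum>b\<in>UNIV. \<Sum>j<l. D b j * (\<Sum>c<l. R c b j))"
      by (simp add: sum_distrib_left)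
    also have "\<dots> = 0"
    proof -
      have "(\<Sum>c<l. R c b j) = 0" if "j < l" for b j
        unfolding R_def using rot_sum[OF that, of "z x b"] zx by simp
      then show ?thesis by simp
    qed
    finally show ?thesis .
  qed
  have s2: "(\<Sum>c<l. \<Sum>b\<in>UNIV. \<Sum>j<l. (R c b j)\<^sup>2) = real l * SZ"
  proof -
    have "(\<Sum>c<l. \<Sum>b\<in>UNIV. \<Sum>j<l. (R c b j)\<^sup>2) = (\<Sum>b\<in>UNIV. \<Sum>c<l. \<Sum>j<l. (R c b j)\<^sup>2)"
      by (rule sum.swap)
    also have "\<dots> = (\<Sum>b\<in>UNIV. \<Sum>j<l. \<Sum>c<l. (R c b j)\<^sup>2)"
      by (rule sum.cong[OF refl], rule sum.swap)
    also have "\<dots> = (\<Sum>b\<in>(UNIV::bool set). \<Sum>j<l. \<Sum>i<l. (z x b i)\<^sup>2)"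
    proof -
      have "(\<Sum>c<l. (R c b j)\<^sup>2) = (\<Sum>i<l. (z x b i)\<^sup>2)" if "j < l" for b j
        unfolding R_def using rot_sum[OF that, of "\<lambda>i. (z x b i)\<^sup>2"] by simp
      then show ?thesis by simp
    qed
    also have "\<dots> = real l * SZ" unfolding SZ_def by (simp add: sum_distrib_left)
    finally show ?thesis .
  qed
  have "(\<Sum>c<l. f c) = real l * SD + 2 * 0 + real l * SZ"
    unfolding fc sum.distrib using s1 s2 by (simp add: sum_distrib_left[symmetric])
  then have "(\<Sum>c<l. f c) \<le> real l * (SD + SZ)" by (simp add: algebra_simps)
  then obtain c where c: "c < l" "f c \<le> SD + SZ" using exists_below_avg[OF l] by blast
  define \<tau> where "\<tau> = \<tau>0(x := c)"
  have tl: "\<forall>t. \<tau> t < l" using t0 c unfolding \<tau>_def by simp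
  have split: "(\<Sum>t\<in>insert x F. z t b ((j + l - \<tau> t) mod l)) = D b j + R c b j" for b j
  proof -
    have "(\<Sum>t\<in>F. z t b ((j + l - \<tau> t) mod l)) = D b j"
      unfolding D_def \<tau>_def using insert.hyps(2) by (intro sum.cong) auto
    then show ?thesis using insert.hyps unfolding R_def \<tau>_def by simp
  qed
  have "(\<Sum>b\<in>UNIV. \<Sum>j<l. (\<Sum>t\<in>insert x F. z t b ((j + l - \<tau> t) mod l))\<^sup>2) = f c"
    unfolding f_def split ..
  also have "\<dots> \<le> SD + SZ" using c by simp
  also have "\<dots> \<le> (\<Sum>t\<in>F. \<Sum>b\<in>UNIV. \<Sum>j<l. (z t b j)\<^sup>2) + SZ"
    using b0 unfolding SD_def D_def by simp
  also have "\<dots> = (\<Sum>t\<in>insert x F. \<Sum>b\<in>UNIV. \<Sum>j<l. (z t b j)\<^sup>2)"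
    using insert.hyps unfolding SZ_def by simp
  finally show ?case using tl by blast
qed

lemma rot_iff:
  assumes "(\<tau>::nat) < l" "j < l"
  shows "(\<tau> + d) mod l = j \<longleftrightarrow> d mod l = (j + l - \<tau>) mod l"
proof -
  define e where "e = d mod l"
  have l: "l > 0" using assms by simp
  have el: "e < l" unfolding e_def using l by simp
  have "(\<tau> + d) mod l = (\<tau> + e) mod l" unfolding e_def by (simp add: mod_add_right_eq)
  moreover have "(\<tau> + e) mod l = (if \<tau> + e < l then \<tau> + e else \<tau> + e - l)"
    using el assms by (simp add: mod_if le_mod_geq)
  moreover have "(j + l - \<tau>) mod l = (if j + l - \<tau> < l then j + l - \<tau> else j - \<tau>)"
    using assms by (auto simp: mod_if le_mod_geq)
  ultimately show ?thesis using el assms unfolding e_def[symmetric] by auto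
qed

lemma card_diff_bound:
  assumes fin: "finite X" and eq: "\<And>x. x \<in> X \<Longrightarrow> x \<notin> Z \<Longrightarrow> (P x \<longleftrightarrow> Q x)"
  shows "card {x\<in>X. P x} \<le> card {x\<in>X. Q x} + card (X \<inter> Z)"
proof -
  have "{x\<in>X. P x} \<subseteq> {x\<in>X. Q x} \<union> (X \<inter> Z)" using eq by auto
  then have "card {x\<in>X. P x} \<le> card ({x\<in>X. Q x} \<union> (X \<inter> Z))" by (intro card_mono) (use fin in auto)
  also have "\<dots> \<le> card {x\<in>X. Q x} + card (X \<inter> Z)" by (rule card_Un_le)
  finally show ?thesis .
qed

lemma abs_card_diff:
  assumes fin: "finite X" and eq: "\<And>x. x \<in> X \<Longrightarrow> x \<notin> Z \<Longrightarrow> (P x \<longleftrightarrow> Q x)"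
  shows "\<bar>real (card {x\<in>X. P x}) - real (card {x\<in>X. Q x})\<bar> \<le> real (card (X \<inter> Z))"
proof -
  have 1: "card {x\<in>X. P x} \<le> card {x\<in>X. Q x} + card (X \<inter> Z)" by (rule card_diff_bound[OF fin eq])
  have 2: "card {x\<in>X. Q x} \<le> card {x\<in>X. P x} + card (X \<inter> Z)" by (rule card_diff_bound[OF fin]) (use eq in blast)
  show ?thesis using 1 2 by linarith
qed

lemma card_fibres:
  assumes "finite S" "finite T" "g ` S \<subseteq> T"
  shows "card S = (\<Sum>t\<in>T. card {x\<in>S. g x = t})"
proof -
  have "(\<Sum>t\<in>T. \<Sum>x\<in>{x. x \<in> S \<and> g x = t}. (1::nat)) = (\<Sum>x\<in>S. 1)"
    by (rule sum.group[OF assms])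
  then show ?thesis by simp
qed

context rpiece
begin

definition yv :: "nat \<Rightarrow> 'a \<Rightarrow> nat \<Rightarrow> nat" where
  "yv l t j = card {v\<in>V. top v = t \<and> pd v mod l = j}"
definition ye :: "nat \<Rightarrow> 'a \<Rightarrow> nat \<Rightarrow> nat" where
  "ye l t j = card {v\<in>V. top v = t \<and> 0 < pd v \<and> (pd v - 1) mod l = j}"
definition Y :: "nat \<Rightarrow> 'a \<Rightarrow> bool \<Rightarrow> nat \<Rightarrow> real" where
  "Y l t b j = real (if b then ye l t j else yv l t j)"
definition zz :: "nat \<Rightarrow> 'a \<Rightarrow> bool \<Rightarrow> nat \<Rightarrow> real" where
  "zz l t b j = Y l t b j - (\<Sum>i<l. Y l t b i) / real l"

lemma zz_sum: "l > 0 \<Longrightarrow> (\<Sum>j<l. zz l t b j) = 0"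
  unfolding zz_def by (simp add: sum_subtractf)

lemma fin_piece: "finite (piece t)" unfolding piece_def using finV by simp

lemma rowsum_v: "l > 0 \<Longrightarrow> (\<Sum>i<l. yv l t i) = card (piece t)"
proof -
  assume l: "l > 0"
  have "card {v\<in>V. top v = t} = (\<Sum>i<l. card {x\<in>{v\<in>V. top v = t}. pd x mod l = i})"
    by (rule card_fibres) (use finV l in auto)
  also have "\<dots> = (\<Sum>i<l. yv l t i)" unfolding yv_def
    by (intro sum.cong refl arg_cong[where f=card]) auto
  finally show ?thesis unfolding piece_def by simp
qed

lemma rowsum_e: "l > 0 \<Longrightarrow> (\<Sum>i<l. ye l t i) = card {v\<in>V. top v = t \<and> 0 < pd v}"
proof -
  assume l: "l > 0"
  have "card {v\<in>V. top v = t \<and> 0 < pd v} = (\<Sum>i<l. card {x\<in>{v\<in>V. top v = t \<and> 0 < pd v}. (pd x - 1) mod l = i})"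
    by (rule card_fibres) (use finV l in auto)
  also have "\<dots> = (\<Sum>i<l. ye l t i)" unfolding ye_def
    by (intro sum.cong refl arg_cong[where f=card]) auto
  finally show ?thesis by simp
qed

lemma pd0_iff: "v \<in> V \<Longrightarrow> pd v = 0 \<longleftrightarrow> v \<in> K"
  using pd_K top_K unfolding top_def by force

lemma sum_pieces: "(\<Sum>t\<in>K. card {v\<in>V. top v = t \<and> R v}) = card {v\<in>V. R v}"
proof -
  have "card {v\<in>V. R v} = (\<Sum>t\<in>K. card {x\<in>{v\<in>V. R v}. top x = t})"
    by (rule card_fibres) (use finV KV top_K finite_subset in auto)
  also have "\<dots> = (\<Sum>t\<in>K. card {v\<in>V. top v = t \<and> R v})"
    by (intro sum.cong refl arg_cong[where f=card]) auto
  finally show ?thesis by simp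
qed

lemma Y_le: "Y l t b j \<le> real (card (piece t))"
proof -
  have "yv l t j \<le> card (piece t)" unfolding yv_def piece_def
    by (rule card_mono) (use finV in auto)
  moreover have "ye l t j \<le> card (piece t)" unfolding ye_def piece_def
    by (rule card_mono) (use finV in auto)
  ultimately show ?thesis unfolding Y_def by auto
qed

lemma zz_abs:
  assumes l: "l > 0"
  shows "\<bar>zz l t b j\<bar> \<le> real (card (piece t))"
proof -
  define P where "P = real (card (piece t))"
  have m: "(\<Sum>i<l. Y l t b i) \<le> P"
  proof (cases b)
    case True
    then have "(\<Sum>i<l. Y l t b i) = real (card {v\<in>V. top v = t \<and> 0 < pd v})"
      unfolding Y_def using rowsum_e[OF l] by (simp flip: of_nat_sum)
    also have "\<dots> \<le> P" unfolding P_def piece_def by (simp, rule card_mono) (use finV in auto)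
    finally show ?thesis .
  next
    case False
    then show ?thesis unfolding Y_def P_def using rowsum_v[OF l] by (simp flip: of_nat_sum)
  qed
  have m0: "0 \<le> (\<Sum>i<l. Y l t b i)" unfolding Y_def by (simp add: sum_nonneg)
  have "(\<Sum>i<l. Y l t b i) / real l \<le> (\<Sum>i<l. Y l t b i) / 1"
    by (rule frac_le) (use m0 l in auto)
  then have "(\<Sum>i<l. Y l t b i) / real l \<le> P" using m by simp
  moreover have "0 \<le> (\<Sum>i<l. Y l t b i) / real l" using m0 by simp
  moreover have "0 \<le> Y l t b j" "Y l t b j \<le> P" unfolding P_def using Y_le by (auto simp: Y_def)
  ultimately show ?thesis unfolding zz_def P_def by linarith
qed

end

context rpos
begin

definition Acnt :: "nat \<Rightarrow> nat" where "Acnt j = card {v\<in>V. pos v = j}"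
definition Bcnt :: "nat \<Rightarrow> nat" where "Bcnt j = card {v\<in>V. v \<noteq> r \<and> lo v = j}"
definition Zn :: "'a set" where "Zn = {v\<in>V. pd v \<le> l}"

lemma A_close:
  "\<bar>real (Acnt j) - real (card {v\<in>V. (\<tau> (top v) + pd v) mod l = j})\<bar> \<le> real (card Zn)"
proof -
  have "\<bar>real (Acnt j) - real (card {v\<in>V. (\<tau> (top v) + pd v) mod l = j})\<bar> \<le> real (card (V \<inter> Zn))"
    unfolding Acnt_def by (rule abs_card_diff[OF finV]) (auto simp: Zn_def pos_far)
  also have "V \<inter> Zn = Zn" unfolding Zn_def by auto
  finally show ?thesis .
qed

lemma B_close:
  "\<bar>real (Bcnt j) - real (card {v\<in>V. 0 < pd v \<and> (\<tau> (top v) + (pd v - 1)) mod l = j})\<bar> \<le> real (card Zn)"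
proof -
  have pr: "pd r = 0" using pd_K rK by simp
  have "\<bar>real (Bcnt j) - real (card {v\<in>V. 0 < pd v \<and> (\<tau> (top v) + (pd v - 1)) mod l = j})\<bar> \<le> real (card (V \<inter> Zn))"
    unfolding Bcnt_def
  proof (rule abs_card_diff[OF finV])
    fix x assume x: "x \<in> V" "x \<notin> Zn"
    then have "l < pd x" unfolding Zn_def by auto
    then show "(x \<noteq> r \<and> lo x = j) \<longleftrightarrow> (0 < pd x \<and> (\<tau> (top x) + (pd x - 1)) mod l = j)"
      using lo_far[OF x(1)] pr by auto
  qed
  also have "V \<inter> Zn = Zn" unfolding Zn_def by auto
  finally show ?thesis .
qed

lemma cA_eq:
  assumes j: "j < l"
  shows "real (card {v\<in>V. (\<tau> (top v) + pd v) mod l = j}) = (\<Sum>t\<in>Kc s. Y l t False ((j + l - \<tau> t) mod l))"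
proof -
  have "card {v\<in>V. (\<tau> (top v) + pd v) mod l = j} = (\<Sum>t\<in>Kc s. card {v\<in>V. top v = t \<and> (\<tau> (top v) + pd v) mod l = j})"
    using sum_pieces[of "\<lambda>v. (\<tau> (top v) + pd v) mod l = j"] by simp
  also have "\<dots> = (\<Sum>t\<in>Kc s. yv l t ((j + l - \<tau> t) mod l))"
    unfolding yv_def
    by (intro sum.cong refl arg_cong[where f=card] Collect_cong) (use rot_iff[OF tau_lt j] in auto)
  finally show ?thesis unfolding Y_def by simp
qed

lemma cB_eq:
  assumes j: "j < l"
  shows "real (card {v\<in>V. 0 < pd v \<and> (\<tau> (top v) + (pd v - 1)) mod l = j}) = (\<Sum>t\<in>Kc s. Y l t True ((j + l - \<tau> t) mod l))"
proof -
  have "card {v\<in>V. 0 < pd v \<and> (\<tau> (top v) + (pd v - 1)) mod l = j}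
       = (\<Sum>t\<in>Kc s. card {v\<in>V. top v = t \<and> (0 < pd v \<and> (\<tau> (top v) + (pd v - 1)) mod l = j)})"
    using sum_pieces[of "\<lambda>v. 0 < pd v \<and> (\<tau> (top v) + (pd v - 1)) mod l = j"] by simp
  also have "\<dots> = (\<Sum>t\<in>Kc s. ye l t ((j + l - \<tau> t) mod l))"
    unfolding ye_def
    by (intro sum.cong refl arg_cong[where f=card] Collect_cong) (use rot_iff[OF tau_lt j] in auto)
  finally show ?thesis unfolding Y_def by simp
qed

lemma meanA: "(\<Sum>t\<in>Kc s. (\<Sum>i<l. Y l t False i)) = real (card V)"
proof -
  have "(\<Sum>t\<in>Kc s. (\<Sum>i<l. Y l t False i)) = real (\<Sum>t\<in>Kc s. card {v\<in>V. top v = t \<and> True})"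
    unfolding Y_def using rowsum_v[OF lpos] unfolding piece_def by (simp flip: of_nat_sum)
  also have "\<dots> = real (card V)" using sum_pieces[of "\<lambda>_. True"] by simp
  finally show ?thesis .
qed

lemma meanB: "(\<Sum>t\<in>Kc s. (\<Sum>i<l. Y l t True i)) = real (card V) - real (card (Kc s))"
proof -
  have "(\<Sum>t\<in>Kc s. (\<Sum>i<l. Y l t True i)) = real (\<Sum>t\<in>Kc s. card {v\<in>V. top v = t \<and> 0 < pd v})"
    unfolding Y_def using rowsum_e[OF lpos] by (simp flip: of_nat_sum)
  also have "\<dots> = real (card {v\<in>V. 0 < pd v})" using sum_pieces[of "\<lambda>v. 0 < pd v"] by simp
  also have "{v\<in>V. 0 < pd v} = V - Kc s" using pd0_iff by fastforce
  also have "real (card (V - Kc s)) = real (card V) - real (card (Kc s))"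
    using card_Diff_subset[OF finite_subset[OF Kc_V finV] Kc_V] card_mono[OF finV Kc_V] by simp
  finally show ?thesis .
qed

lemma zone_bound: "card Zn \<le> card (Kc s) * (\<Sum>d\<le>l. \<Delta> ^ d)"
proof -
  have "Zn \<subseteq> (\<Union>t\<in>Kc s. \<Union>d\<in>{..l}. layer t d)"
    unfolding Zn_def layer_def using top_K by auto
  then have "card Zn \<le> card (\<Union>t\<in>Kc s. \<Union>d\<in>{..l}. layer t d)"
    by (intro card_mono) (auto intro!: finite_UN_I finite_subset[OF Kc_V finV] simp: layer_def finV)
  also have "\<dots> \<le> (\<Sum>t\<in>Kc s. card (\<Union>d\<in>{..l}. layer t d))"
    by (rule card_UN_le) (rule finite_subset[OF Kc_V finV])
  also have "\<dots> \<le> (\<Sum>t\<in>Kc s. \<Sum>d\<le>l. \<Delta> ^ d)"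
  proof (rule sum_mono)
    fix t
    have "card (\<Union>d\<in>{..l}. layer t d) \<le> (\<Sum>d\<le>l. card (layer t d))" by (rule card_UN_le) simp
    also have "\<dots> \<le> (\<Sum>d\<le>l. \<Delta> ^ d)" by (rule sum_mono) (rule layer_card)
    finally show "card (\<Union>d\<in>{..l}. layer t d) \<le> (\<Sum>d\<le>l. \<Delta> ^ d)" .
  qed
  also have "\<dots> = card (Kc s) * (\<Sum>d\<le>l. \<Delta> ^ d)" by simp
  finally show ?thesis .
qed

end

context rpos
begin

lemma sq_le_sum2:
  fixes F :: "bool \<Rightarrow> nat \<Rightarrow> real"
  assumes "j < l"
  shows "(F b j)\<^sup>2 \<le> (\<Sum>b\<in>UNIV. \<Sum>j<l. (F b j)\<^sup>2)"
proof -
  have "(F b j)\<^sup>2 \<le> (\<Sum>j<l. (F b j)\<^sup>2)"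
    by (rule member_le_sum[of j "{..<l}" "\<lambda>j. (F b j)\<^sup>2"]) (use assms in auto)
  also have "\<dots> \<le> (\<Sum>b\<in>UNIV. \<Sum>j<l. (F b j)\<^sup>2)"
    by (rule member_le_sum[of b UNIV "\<lambda>b. \<Sum>j<l. (F b j)\<^sup>2"]) (auto intro: sum_nonneg)
  finally show ?thesis .
qed

lemma rhs_bound:
  "(\<Sum>t\<in>Kc s. \<Sum>b\<in>UNIV. \<Sum>j<l. (zz l t b j)\<^sup>2) \<le> 2 * real l * (1 + real \<Delta> * (real s - 1)) * real (card V)"
proof -
  define c where "c = 1 + real \<Delta> * (real s - 1)"
  have Pc: "real (card (piece t)) \<le> c" if "t \<in> Kc s" for t
  proof -
    have "card (piece t) \<le> 1 + \<Delta> * (s - 1)" using piece_small that by blast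
    moreover have "real (1 + \<Delta> * (s - 1)) = c" unfolding c_def using spos by (simp add: of_nat_diff)
    ultimately show ?thesis by (metis of_nat_le_iff)
  qed
  have "(\<Sum>t\<in>Kc s. \<Sum>b\<in>UNIV. \<Sum>j<l. (zz l t b j)\<^sup>2) \<le> (\<Sum>t\<in>Kc s. \<Sum>b\<in>(UNIV::bool set). \<Sum>j<l. (real (card (piece t)))\<^sup>2)"
  proof (intro sum_mono)
    fix t b j
    have "\<bar>zz l t b j\<bar> \<le> real (card (piece t))" by (rule zz_abs[OF lpos])
    then show "(zz l t b j)\<^sup>2 \<le> (real (card (piece t)))\<^sup>2"
      by (metis abs_ge_zero power2_abs power_mono)
  qed
  also have "\<dots> = (\<Sum>t\<in>Kc s. 2 * real l * (real (card (piece t)) * real (card (piece t))))"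
    by (simp add: power2_eq_square mult.assoc)
  also have "\<dots> \<le> (\<Sum>t\<in>Kc s. 2 * real l * (c * real (card (piece t))))"
    by (intro sum_mono mult_left_mono mult_right_mono Pc) auto
  also have "\<dots> = 2 * real l * c * real (\<Sum>t\<in>Kc s. card (piece t))"
    by (simp add: sum_distrib_left mult.assoc)
  also have "(\<Sum>t\<in>Kc s. card (piece t)) = card V"
    using sum_pieces[of "\<lambda>_. True"] unfolding piece_def by simp
  finally show ?thesis unfolding c_def by simp
qed

lemma main_bound:
  assumes G: "(\<Sum>b\<in>UNIV. \<Sum>j<l. (\<Sum>t\<in>Kc s. zz l t b ((j + l - \<tau> t) mod l))\<^sup>2)
      \<le> (\<Sum>t\<in>Kc s. \<Sum>b\<in>UNIV. \<Sum>j<l. (zz l t b j)\<^sup>2)"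
    and j: "j < l"
  shows "\<bar>real (Acnt j) - real (card V) / real l\<bar>
           \<le> real (card (Kc s) * (\<Sum>d\<le>l. \<Delta> ^ d)) + sqrt (2 * real l * (1 + real \<Delta> * (real s - 1)) * real (card V))"
    and "\<bar>real (Bcnt j) - real (card V) / real l\<bar>
           \<le> real (card (Kc s) * (\<Sum>d\<le>l. \<Delta> ^ d)) + sqrt (2 * real l * (1 + real \<Delta> * (real s - 1)) * real (card V))
             + real (card (Kc s)) / real l"
proof -
  define S where "S b j = (\<Sum>t\<in>Kc s. zz l t b ((j + l - \<tau> t) mod l))" for b j
  define M where "M = sqrt (2 * real l * (1 + real \<Delta> * (real s - 1)) * real (card V))"
  have Sb: "\<bar>S b j\<bar> \<le> M" for b
  proof -
    have "(S b j)\<^sup>2 \<le> (\<Sum>b\<in>UNIV. \<Sum>j<l. (S b j)\<^sup>2)" by (rule sq_le_sum2[OF j])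
    also have "\<dots> \<le> 2 * real l * (1 + real \<Delta> * (real s - 1)) * real (card V)"
      using G rhs_bound unfolding S_def by linarith
    finally have "sqrt ((S b j)\<^sup>2) \<le> M" unfolding M_def by (rule real_sqrt_le_mono)
    then show ?thesis by simp
  qed
  have SA: "S False j = real (card {v\<in>V. (\<tau> (top v) + pd v) mod l = j}) - real (card V) / real l"
  proof -
    have "S False j = (\<Sum>t\<in>Kc s. Y l t False ((j + l - \<tau> t) mod l)) - (\<Sum>t\<in>Kc s. (\<Sum>i<l. Y l t False i)) / real l"
      unfolding S_def zz_def by (simp add: sum_subtractf sum_divide_distrib)
    then show ?thesis using cA_eq[OF j] meanA by simp
  qed
  have SB: "S True j = real (card {v\<in>V. 0 < pd v \<and> (\<tau> (top v) + (pd v - 1)) mod l = j})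
             - (real (card V) - real (card (Kc s))) / real l"
  proof -
    have "S True j = (\<Sum>t\<in>Kc s. Y l t True ((j + l - \<tau> t) mod l)) - (\<Sum>t\<in>Kc s. (\<Sum>i<l. Y l t True i)) / real l"
      unfolding S_def zz_def by (simp add: sum_subtractf sum_divide_distrib)
    then show ?thesis using cB_eq[OF j] meanB by simp
  qed
  have Z: "real (card Zn) \<le> real (card (Kc s) * (\<Sum>d\<le>l. \<Delta> ^ d))"
    using zone_bound by (simp only: of_nat_le_iff)
  show "\<bar>real (Acnt j) - real (card V) / real l\<bar>
           \<le> real (card (Kc s) * (\<Sum>d\<le>l. \<Delta> ^ d)) + sqrt (2 * real l * (1 + real \<Delta> * (real s - 1)) * real (card V))"
    using A_close[of j] SA Sb[of False] Z unfolding M_def by linarith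
  have "(real (card V) - real (card (Kc s))) / real l = real (card V) / real l - real (card (Kc s)) / real l"
    by (simp add: diff_divide_distrib)
  moreover have "0 \<le> real (card (Kc s)) / real l" by simp
  ultimately show "\<bar>real (Bcnt j) - real (card V) / real l\<bar>
           \<le> real (card (Kc s) * (\<Sum>d\<le>l. \<Delta> ^ d)) + sqrt (2 * real l * (1 + real \<Delta> * (real s - 1)) * real (card V))
             + real (card (Kc s)) / real l"
    using B_close[of j] SB Sb[of True] Z unfolding M_def by linarith
qed

end

lemma asym_lim: "((\<lambda>x::real. sqrt x * sqrt (sqrt x) * (ln x)\<^sup>2 / x) \<longlongrightarrow> 0) at_top"
  by real_asymp

lemma asym_nat:
  fixes C :: real
  assumes C: "C > 0"
  shows "\<exists>n0::nat. \<forall>n\<ge>n0. 3 \<le> n \<and> C * (sqrt (real n) * sqrt (sqrt (real n))) \<le> real n / (ln (real n))\<^sup>2"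
proof -
  have ev: "eventually (\<lambda>x::real. sqrt x * sqrt (sqrt x) * (ln x)\<^sup>2 / x < 1 / C) at_top"
    using order_tendstoD(2)[OF asym_lim] C by simp
  have ev2: "eventually (\<lambda>n::nat. sqrt (real n) * sqrt (sqrt (real n)) * (ln (real n))\<^sup>2 / real n < 1 / C) sequentially"
    using eventually_compose_filterlim[OF ev filterlim_real_sequentially] by simp
  have ev3: "eventually (\<lambda>n::nat. 3 \<le> n) sequentially" by (rule eventually_ge_at_top)
  obtain n0 where n0: "\<forall>n\<ge>n0. sqrt (real n) * sqrt (sqrt (real n)) * (ln (real n))\<^sup>2 / real n < 1 / C \<and> 3 \<le> n"
    using eventually_conj[OF ev2 ev3] unfolding eventually_sequentially by blast
  show ?thesis
  proof (intro exI[of _ n0] allI impI conjI)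
    fix n assume n: "n0 \<le> n"
    then have h: "sqrt (real n) * sqrt (sqrt (real n)) * (ln (real n))\<^sup>2 / real n < 1 / C" "3 \<le> n" using n0 by auto
    then show "3 \<le> n" by simp
    have npos: "real n > 0" using h by simp
    have lnpos: "ln (real n) > 0" using h by simp
    define F where "F = sqrt (real n) * sqrt (sqrt (real n))"
    have "F * (ln (real n))\<^sup>2 < real n / C" using h npos unfolding F_def
      by (simp add: divide_less_eq field_simps)
    then have "C * F * (ln (real n))\<^sup>2 < real n" using C by (simp add: field_simps)
    then have "C * F < real n / (ln (real n))\<^sup>2" using lnpos by (simp add: field_simps)
    then show "C * (sqrt (real n) * sqrt (sqrt (real n))) \<le> real n / (ln (real n))\<^sup>2" unfolding F_def by simp
  qed
qed

lemma suc_mod_neq: "a < l \<Longrightarrow> 2 \<le> l \<Longrightarrow> (a + 1) mod l \<noteq> (a::nat)"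
proof (cases "a + 1 = l")
  case True
  assume "a < l" "2 \<le> l"
  then show ?thesis using True by simp
next
  case False
  assume "a < l" "2 \<le> l"
  then have "a + 1 < l" using False by simp
  then show ?thesis by simp
qed

lemma cedge_inj0:
  assumes l: "l \<ge> 3" "i < l" "j < (l::nat)" and e: "{i, Suc i mod l} = {j, Suc j mod l}"
  shows "i = j"
proof (rule ccontr)
  assume ne: "i \<noteq> j"
  then have 1: "i = Suc j mod l" and 2: "j = Suc i mod l" using e by (auto simp: doubleton_eq_iff)
  have a: "Suc j mod l = (if Suc j = l then 0 else Suc j)" using l by (simp add: mod_Suc)
  have b: "Suc i mod l = (if Suc i = l then 0 else Suc i)" using l by (simp add: mod_Suc)
  show False
  proof (cases "Suc j = l")
    case True
    then have i0: "i = 0" using 1 by simp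
    show False
    proof (cases "Suc i = l")
      case True then show False using i0 l by simp
    next
      case False then have "j = Suc i" using 2 b by simp
      then show False using i0 \<open>Suc j = l\<close> l by simp
    qed
  next
    case False
    then have i1: "i = Suc j" using 1 a by simp
    show False
    proof (cases "Suc i = l")
      case True then have "j = 0" using 2 by simp
      then show False using True i1 l by simp
    next
      case False then have "j = Suc i" using 2 b by simp
      then show False using i1 by simp
    qed
  qed
qed

context rpos
begin

lemma pos_neq_par: "w \<in> V \<Longrightarrow> w \<noteq> r \<Longrightarrow> pos w \<noteq> pos (par w)"
proof
  assume w: "w \<in> V" "w \<noteq> r" and eq: "pos w = pos (par w)"
  have l2: "2 \<le> l" using l3 by simp
  have "pos w = (pos (par w) + 1) mod l \<or> pos (par w) = (pos w + 1) mod l"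
    using pos_adj[OF w] unfolding adj_def by blast
  then show False using eq suc_mod_neq[OF pos_lt l2] by metis
qed

lemma cedge_inj: "i < l \<Longrightarrow> j < l \<Longrightarrow> cedge i = cedge j \<Longrightarrow> i = j"
  unfolding cedge_def using cedge_inj0 l3 by blast

lemma edge_inj:
  assumes w: "w \<in> V" "w \<noteq> r" and w': "w' \<in> V" "w' \<noteq> r" and e: "{w, par w} = {w', par w'}"
  shows "w = w'"
proof (rule ccontr)
  assume "w \<noteq> w'"
  then have "w = par w'" "w' = par w" using e by (auto simp: doubleton_eq_iff)
  then show False using dpar[OF w] dpar[OF w'] by simp
qed

definition eroot :: "'a set \<Rightarrow> 'a" where "eroot e = (SOME w. w \<in> V \<and> w \<noteq> r \<and> e = {w, par w})"

lemma eroot_eq: "w \<in> V \<Longrightarrow> w \<noteq> r \<Longrightarrow> eroot {w, par w} = w"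
proof -
  assume w: "w \<in> V" "w \<noteq> r"
  have "eroot {w, par w} \<in> V \<and> eroot {w, par w} \<noteq> r \<and> {w, par w} = {eroot {w, par w}, par (eroot {w, par w})}"
    unfolding eroot_def by (rule someI[of _ w]) (use w in simp)
  then show ?thesis using edge_inj w by metis
qed

definition lab :: "'a + 'a set \<times> nat \<Rightarrow> nat + nat set \<times> nat" where
  "lab y = (case y of Inl v \<Rightarrow> Inl (pos v) | Inr (e, a) \<Rightarrow> Inr (cedge (lo (eroot e)), a))"

lemma lab_Inl[simp]: "lab (Inl v) = Inl (pos v)" unfolding lab_def by simp
lemma lab_Inr[simp]: "lab (Inr (e, a)) = Inr (cedge (lo (eroot e)), a)" unfolding lab_def by simp

end

context rpos
begin

lemma loose_cases:
  assumes "x \<in> loose_cycle_verts k l"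
  shows "(\<exists>j<l. x = Inl j) \<or> (\<exists>j a. j < l \<and> a < k - 2 \<and> x = Inr (cedge j, a))"
  using assms unfolding loose_cycle_verts_def exp_verts_def cycle_verts_def cycle_edges_def cedge_def
  by blast

lemma cedge_loose: "j < l \<Longrightarrow> a < k - 2 \<Longrightarrow> Inr (cedge j, a) \<in> loose_cycle_verts k l"
  unfolding loose_cycle_verts_def exp_verts_def cycle_edges_def cedge_def by blast

lemma Inl_loose: "j < l \<Longrightarrow> Inl j \<in> loose_cycle_verts k l"
  unfolding loose_cycle_verts_def exp_verts_def cycle_verts_def by blast

lemma cedge_cyc: "j < l \<Longrightarrow> cedge j \<in> cycle_edges l"
  unfolding cycle_edges_def cedge_def by blast

lemma X_cases:
  assumes Edef: "E = (\<lambda>v. {v, par v}) ` (V - {r})" and y: "y \<in> exp_verts k V E"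
  shows "(\<exists>v\<in>V. y = Inl v) \<or> (\<exists>w i. w \<in> V \<and> w \<noteq> r \<and> i < k - 2 \<and> y = Inr ({w, par w}, i))"
  using y unfolding exp_verts_def Edef by blast

lemma lab_Inr_edge: "w \<in> V \<Longrightarrow> w \<noteq> r \<Longrightarrow> lab (Inr ({w, par w}, i)) = Inr (cedge (lo w), i)"
  using eroot_eq by simp

lemma fin_X:
  assumes Edef: "E = (\<lambda>v. {v, par v}) ` (V - {r})"
  shows "finite (exp_verts k V E)"
proof -
  have eq: "({Inr (e, i) | e i. e \<in> E \<and> i < k - 2} :: ('a + 'a set \<times> nat) set) = (\<lambda>(e, i). Inr (e, i)) ` (E \<times> {..<k - 2})" by auto
  have "finite E" unfolding Edef using finV by simp
  then have "finite (E \<times> {..<k - 2})" by simp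
  then have "finite ((\<lambda>(e, i). Inr (e, i)) ` (E \<times> {..<k - 2}) :: ('a + 'a set \<times> nat) set)" by (rule finite_imageI)
  then have "finite ({Inr (e, i) | e i. e \<in> E \<and> i < k - 2} :: ('a + 'a set \<times> nat) set)" unfolding eq .
  then show ?thesis unfolding exp_verts_def using finV by simp
qed

lemma cntA:
  assumes Edef: "E = (\<lambda>v. {v, par v}) ` (V - {r})" and j: "j < l"
  shows "card {y \<in> exp_verts k V E. lab y = Inl j} = Acnt j"
proof -
  have "{y \<in> exp_verts k V E. lab y = Inl j} = Inl ` {v\<in>V. pos v = j}"
  proof
    show "{y \<in> exp_verts k V E. lab y = Inl j} \<subseteq> Inl ` {v\<in>V. pos v = j}"
    proof
      fix y assume y: "y \<in> {y \<in> exp_verts k V E. lab y = Inl j}"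
      then have "(\<exists>v\<in>V. y = Inl v) \<or> (\<exists>w i. w \<in> V \<and> w \<noteq> r \<and> i < k - 2 \<and> y = Inr ({w, par w}, i))"
        using X_cases[OF Edef] by blast
      then show "y \<in> Inl ` {v\<in>V. pos v = j}" using y by auto
    qed
  next
    show "Inl ` {v\<in>V. pos v = j} \<subseteq> {y \<in> exp_verts k V E. lab y = Inl j}"
      unfolding exp_verts_def by auto
  qed
  then show ?thesis unfolding Acnt_def by (simp add: card_image)
qed

lemma cntB:
  assumes Edef: "E = (\<lambda>v. {v, par v}) ` (V - {r})" and j: "j < l" and a: "a < k - 2"
  shows "card {y \<in> exp_verts k V E. lab y = Inr (cedge j, a)} = Bcnt j"
proof -
  have SE: "{y \<in> exp_verts k V E. lab y = Inr (cedge j, a)} = (\<lambda>w. Inr ({w, par w}, a)) ` {v\<in>V. v \<noteq> r \<and> lo v = j}"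
  proof
    show "{y \<in> exp_verts k V E. lab y = Inr (cedge j, a)} \<subseteq> (\<lambda>w. Inr ({w, par w}, a)) ` {v\<in>V. v \<noteq> r \<and> lo v = j}"
    proof
      fix y assume y: "y \<in> {y \<in> exp_verts k V E. lab y = Inr (cedge j, a)}"
      then have "(\<exists>v\<in>V. y = Inl v) \<or> (\<exists>w i. w \<in> V \<and> w \<noteq> r \<and> i < k - 2 \<and> y = Inr ({w, par w}, i))"
        using X_cases[OF Edef] by blast
      moreover have "\<not> (\<exists>v\<in>V. y = Inl v)" using y by auto
      ultimately obtain w i where w: "w \<in> V" "w \<noteq> r" "i < k - 2" "y = Inr ({w, par w}, i)" by blast
      then have "Inr (cedge (lo w), i) = Inr (cedge j, a)" using y lab_Inr_edge by simp
      then have "lo w = j" "i = a" using cedge_inj[OF lo_lt j] by auto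
      then show "y \<in> (\<lambda>w. Inr ({w, par w}, a)) ` {v\<in>V. v \<noteq> r \<and> lo v = j}" using w by auto
    qed
  next
    show "(\<lambda>w. Inr ({w, par w}, a)) ` {v\<in>V. v \<noteq> r \<and> lo v = j} \<subseteq> {y \<in> exp_verts k V E. lab y = Inr (cedge j, a)}"
    proof
      fix y :: "'a + 'a set \<times> nat" assume "y \<in> (\<lambda>w. Inr ({w, par w}, a)) ` {v\<in>V. v \<noteq> r \<and> lo v = j}"
      then obtain w where w: "w \<in> V" "w \<noteq> r" "lo w = j" "y = Inr ({w, par w}, a)" by blast
      have "{w, par w} \<in> E" unfolding Edef using w by blast
      then have "y \<in> exp_verts k V E" unfolding exp_verts_def using w a by blast
      then show "y \<in> {y \<in> exp_verts k V E. lab y = Inr (cedge j, a)}" using w lab_Inr_edge by simp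
    qed
  qed
  have inj: "inj_on (\<lambda>w. Inr ({w, par w}, a)) {v\<in>V. v \<noteq> r \<and> lo v = j}"
    by (rule inj_onI) (use edge_inj in auto)
  show ?thesis unfolding Bcnt_def SE using card_image[OF inj] .
qed

end

context rpos
begin

lemma lab_edge:
  assumes w: "w \<in> V" "w \<noteq> r"
  shows "lab ` exp_edge k {w, par w} = exp_edge k (cedge (lo w))"
    and "inj_on lab (exp_edge k {w, par w})"
proof -
  have e1: "exp_edge k {w, par w} = {Inl w, Inl (par w)} \<union> (\<lambda>i. Inr ({w, par w}, i)) ` {..<k - 2}"
    unfolding exp_edge_def by auto
  have e2: "exp_edge k (cedge (lo w)) = {Inl (pos w), Inl (pos (par w))} \<union> (\<lambda>i. Inr (cedge (lo w), i)) ` {..<k - 2}"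
    unfolding exp_edge_def edge_cedge[OF w, symmetric] by auto
  show "lab ` exp_edge k {w, par w} = exp_edge k (cedge (lo w))"
    unfolding e1 e2 using lab_Inr_edge[OF w] by (auto simp: image_Un image_image)
  have np: "pos w \<noteq> pos (par w)" using pos_neq_par w by blast
  show "inj_on lab (exp_edge k {w, par w})"
    unfolding e1
  proof (rule inj_onI)
    fix x y assume x: "x \<in> {Inl w, Inl (par w)} \<union> (\<lambda>i. Inr ({w, par w}, i)) ` {..<k - 2}"
      and y: "y \<in> {Inl w, Inl (par w)} \<union> (\<lambda>i. Inr ({w, par w}, i)) ` {..<k - 2}"
      and e: "lab x = lab y"
    show "x = y" using x y e np lab_Inr_edge[OF w] by auto
  qed
qed

lemma embed:
  assumes Edef: "E = (\<lambda>v. {v, par v}) ` (V - {r})"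
    and mA: "\<And>j. j < l \<Longrightarrow> Acnt j \<le> m" and mB: "\<And>j. j < l \<Longrightarrow> Bcnt j \<le> m"
  shows "\<exists>\<psi>. is_embedding \<psi> (exp_verts k V E) (exp_edges k E)
              (blowup_verts m (loose_cycle_verts k l)) (blowup_edges m (loose_cycle_edges k l)) \<and>
           (\<forall>x\<in>loose_cycle_verts k l. \<exists>j<l.
              card (\<psi> ` exp_verts k V E \<inter> cluster m x) = Acnt j \<or>
              card (\<psi> ` exp_verts k V E \<inter> cluster m x) = Bcnt j)"
proof -
  define X where "X = exp_verts k V E"
  define S where "S x = {y \<in> X. lab y = x}" for x
  have finX: "finite X" unfolding X_def using fin_X[OF Edef] .
  have finS: "finite (S x)" for x unfolding S_def using finX by simp
  define g where "g x = (SOME f. bij_betw f (S x) {..<card (S x)})" for x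
  have gb: "bij_betw (g x) (S x) {..<card (S x)}" for x
  proof -
    have "\<exists>f. bij_betw f (S x) {..<card (S x)}" using bij_betw_iff_card[OF finS[of x], of "{..<card (S x)}"] by simp
    then show ?thesis unfolding g_def by (rule someI_ex)
  qed
  define \<psi> where "\<psi> y = (lab y, g (lab y) y)" for y
  have lab_loose: "lab y \<in> loose_cycle_verts k l" if "y \<in> X" for y
  proof -
    have "(\<exists>v\<in>V. y = Inl v) \<or> (\<exists>w i. w \<in> V \<and> w \<noteq> r \<and> i < k - 2 \<and> y = Inr ({w, par w}, i))"
      using X_cases[OF Edef] that unfolding X_def by blast
    then show ?thesis using Inl_loose cedge_loose pos_lt lo_lt lab_Inr_edge by auto
  qed
  have Sm: "card (S x) \<le> m" if "x \<in> loose_cycle_verts k l" for x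
  proof -
    have "(\<exists>j<l. x = Inl j) \<or> (\<exists>j a. j < l \<and> a < k - 2 \<and> x = Inr (cedge j, a))"
      using loose_cases that by blast
    then show ?thesis
    proof
      assume "\<exists>j<l. x = Inl j"
      then obtain j where "j < l" "x = Inl j" by blast
      then show ?thesis using cntA[OF Edef] mA unfolding S_def X_def by simp
    next
      assume "\<exists>j a. j < l \<and> a < k - 2 \<and> x = Inr (cedge j, a)"
      then obtain j a where "j < l" "a < k - 2" "x = Inr (cedge j, a)" by blast
      then show ?thesis using cntB[OF Edef] mB unfolding S_def X_def by simp
    qed
  qed
  have inS: "y \<in> S (lab y)" if "y \<in> X" for y unfolding S_def using that by simp
  have glt: "g (lab y) y < m" if "y \<in> X" for y
  proof -
    have "g (lab y) y < card (S (lab y))" using bij_betwE[OF gb] inS[OF that] by blast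
    then show ?thesis using Sm[OF lab_loose[OF that]] by simp
  qed
  have inj: "inj_on \<psi> X"
  proof (rule inj_onI)
    fix x y assume x: "x \<in> X" and y: "y \<in> X" and e: "\<psi> x = \<psi> y"
    then have l: "lab x = lab y" and gg: "g (lab x) x = g (lab x) y" unfolding \<psi>_def by auto
    have "x \<in> S (lab x)" "y \<in> S (lab x)" using inS[OF x] inS[OF y] l by auto
    then show "x = y" using bij_betw_imp_inj_on[OF gb] gg by (meson inj_onD)
  qed
  have img: "\<psi> ` X \<subseteq> blowup_verts m (loose_cycle_verts k l)"
    unfolding blowup_verts_def \<psi>_def using lab_loose glt by auto
  have edges: "\<psi> ` f \<in> blowup_edges m (loose_cycle_edges k l)" if f: "f \<in> exp_edges k E" for f
  proof -
    obtain w where w: "w \<in> V" "w \<noteq> r" "f = exp_edge k {w, par w}"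
      using f unfolding exp_edges_def Edef by blast
    define f' where "f' = exp_edge k (cedge (lo w))"
    note le = lab_edge[OF w(1,2)]
    have fX: "f \<subseteq> X"
    proof -
      have "{w, par w} \<in> E" unfolding Edef using w by blast
      moreover have "par w \<in> V" using parV w by blast
      ultimately show ?thesis unfolding w(3) X_def exp_edge_def exp_verts_def using w by blast
    qed
    define G where "G x = g x (inv_into f lab x)" for x
    have "\<psi> ` f = (\<lambda>x. (x, G x)) ` f'"
    proof -
      have "\<psi> y = (\<lambda>x. (x, G x)) (lab y)" if "y \<in> f" for y
        unfolding \<psi>_def G_def using inv_into_f_f[OF le(2)] that w(3) by simp
      then have "\<psi> ` f = (\<lambda>x. (x, G x)) ` (lab ` f)" by (simp add: image_image cong: image_cong)
      then show ?thesis unfolding f'_def w(3) le(1) by (simp add: w(3))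
    qed
    moreover have "f' \<in> loose_cycle_edges k l"
      unfolding f'_def loose_cycle_edges_def exp_edges_def using cedge_cyc lo_lt by blast
    moreover have "\<forall>x\<in>f'. G x < m"
    proof
      fix x assume "x \<in> f'"
      then have "x \<in> lab ` f" unfolding f'_def w(3) le(1) .
      then obtain y where y: "y \<in> f" "x = lab y" by blast
      have "inv_into f lab x = y" using inv_into_f_f[OF le(2)] y w(3) by simp
      then show "G x < m" unfolding G_def using glt fX y by auto
    qed
    ultimately show ?thesis unfolding blowup_edges_def by blast
  qed
  have clus: "card (\<psi> ` X \<inter> cluster m x) = card (S x)" if "x \<in> loose_cycle_verts k l" for x
  proof -
    have "\<psi> ` X \<inter> cluster m x = \<psi> ` S x"
    proof
      show "\<psi> ` X \<inter> cluster m x \<subseteq> \<psi> ` S x"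
        unfolding cluster_def S_def \<psi>_def by auto
      show "\<psi> ` S x \<subseteq> \<psi> ` X \<inter> cluster m x"
        unfolding cluster_def S_def \<psi>_def using glt by auto
    qed
    moreover have "inj_on \<psi> (S x)" using inj unfolding S_def by (rule inj_on_subset) auto
    ultimately show ?thesis by (simp add: card_image)
  qed
  have cnt: "\<exists>j<l. card (\<psi> ` X \<inter> cluster m x) = Acnt j \<or> card (\<psi> ` X \<inter> cluster m x) = Bcnt j"
    if "x \<in> loose_cycle_verts k l" for x
  proof -
    have "(\<exists>j<l. x = Inl j) \<or> (\<exists>j a. j < l \<and> a < k - 2 \<and> x = Inr (cedge j, a))"
      using loose_cases that by blast
    then show ?thesis
    proof
      assume "\<exists>j<l. x = Inl j"
      then obtain j where "j < l" "x = Inl j" by blast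
      then show ?thesis using cntA[OF Edef] clus[OF that] unfolding S_def X_def by auto
    next
      assume "\<exists>j a. j < l \<and> a < k - 2 \<and> x = Inr (cedge j, a)"
      then obtain j a where "j < l" "a < k - 2" "x = Inr (cedge j, a)" by blast
      then show ?thesis using cntB[OF Edef] clus[OF that] unfolding S_def X_def by auto
    qed
  qed
  have "is_embedding \<psi> X (exp_edges k E) (blowup_verts m (loose_cycle_verts k l)) (blowup_edges m (loose_cycle_edges k l))"
    unfolding is_embedding_def using img inj edges by blast
  then show ?thesis using cnt unfolding X_def by blast
qed

end

lemma children_bound:
  assumes T: "is_tree V E" and Edef: "E = (\<lambda>v. {v, par v}) ` (V - {r})"
    and deg: "max_degree V E \<le> \<Delta>" and v: "v \<in> V"
  shows "card {c \<in> V. c \<noteq> r \<and> par c = v} \<le> \<Delta>"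
proof -
  have fin: "finite V" using T unfolding is_tree_def is_graph_def by simp
  have "{c \<in> V. c \<noteq> r \<and> par c = v} \<subseteq> {u \<in> V. {u, v} \<in> E}" unfolding Edef by auto
  then have "card {c \<in> V. c \<noteq> r \<and> par c = v} \<le> degree V E v"
    unfolding degree_def by (intro card_mono) (use fin in auto)
  also have "degree V E v \<le> max_degree V E"
    unfolding max_degree_def using fin v by (intro Max_ge) auto
  finally show ?thesis using deg by simp
qed

theorem lemma4p3:
  fixes k :: nat
  assumes "k \<ge> 3"
  shows "\<forall>\<Delta> l :: nat. \<Delta> \<ge> 2 \<and> odd l \<and> l \<ge> 3 \<longrightarrow>
    (\<exists>n0::nat. \<forall>n\<ge>n0. \<forall>(V :: nat set) (E :: nat set set).
       is_tree V E \<and> card V = n \<and> max_degree V E \<le> \<Delta> \<longrightarrow>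
       (let m = nat \<lfloor>real n / real l + real n / (ln (real n))^2\<rfloor>;
            HV = blowup_verts m (loose_cycle_verts k l);
            HE = blowup_edges m (loose_cycle_edges k l)
        in \<exists>\<psi>. is_embedding \<psi> (exp_verts k V E) (exp_edges k E) HV HE \<and>
             (\<forall>x\<in>loose_cycle_verts k l.
                real n / real l - real ((l - 1) * (k - 1) - 1) * real n / (ln (real n))^2
                  - real (k - 2)
                  \<le> real (card (\<psi> ` exp_verts k V E \<inter> cluster m x)) \<and>
                real (card (\<psi> ` exp_verts k V E \<inter> cluster m x))
                  \<le> real n / real l + real n / (ln (real n))^2)))"
proof (intro allI impI)
  fix \<Delta> l :: nat
  assume H: "\<Delta> \<ge> 2 \<and> odd l \<and> l \<ge> 3"
  have lodd: "odd l" and l3: "l \<ge> 3" using H by auto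
  define Z0 where "Z0 = (\<Sum>d\<le>l. \<Delta> ^ d)"
  define C where "C = 2 * (real Z0 + 1) + sqrt (2 * real l * (1 + real \<Delta>))"
  have Cpos: "C > 0" unfolding C_def by (simp add: add_pos_nonneg)
  obtain n0 where n0: "\<forall>n\<ge>n0. 3 \<le> n \<and> C * (sqrt (real n) * sqrt (sqrt (real n))) \<le> real n / (ln (real n))\<^sup>2"
    using asym_nat[OF Cpos] by blast
  show "\<exists>n0::nat. \<forall>n\<ge>n0. \<forall>(V :: nat set) (E :: nat set set).
       is_tree V E \<and> card V = n \<and> max_degree V E \<le> \<Delta> \<longrightarrow>
       (let m = nat \<lfloor>real n / real l + real n / (ln (real n))^2\<rfloor>;
            HV = blowup_verts m (loose_cycle_verts k l);
            HE = blowup_edges m (loose_cycle_edges k l)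
        in \<exists>\<psi>. is_embedding \<psi> (exp_verts k V E) (exp_edges k E) HV HE \<and>
             (\<forall>x\<in>loose_cycle_verts k l.
                real n / real l - real ((l - 1) * (k - 1) - 1) * real n / (ln (real n))^2
                  - real (k - 2)
                  \<le> real (card (\<psi> ` exp_verts k V E \<inter> cluster m x)) \<and>
                real (card (\<psi> ` exp_verts k V E \<inter> cluster m x))
                  \<le> real n / real l + real n / (ln (real n))^2))"
  proof (intro exI[of _ n0] allI impI)
    fix n :: nat and V :: "nat set" and E :: "nat set set"
    assume nn0: "n0 \<le> n" and TT: "is_tree V E \<and> card V = n \<and> max_degree V E \<le> \<Delta>"
    have T: "is_tree V E" and cV: "card V = n" and deg: "max_degree V E \<le> \<Delta>" using TT by auto
    have n3: "3 \<le> n" and errC: "C * (sqrt (real n) * sqrt (sqrt (real n))) \<le> real n / (ln (real n))\<^sup>2"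
      using n0 nn0 by auto
    define \<epsilon> where "\<epsilon> = real n / (ln (real n))\<^sup>2"
    define m where "m = nat \<lfloor>real n / real l + real n / (ln (real n))^2\<rfloor>"
    obtain r par and depth :: "nat \<Rightarrow> nat" where
      rt: "r \<in> V" "depth r = 0" "\<forall>v\<in>V - {r}. par v \<in> V \<and> depth v = Suc (depth (par v))"
      and Edef: "E = (\<lambda>v. {v, par v}) ` (V - {r})"
      using tree_rooted[OF T]
      apply (elim exE conjE)
      apply (rule that)
      apply assumption+
      done
    have finV: "finite V" using T unfolding is_tree_def is_graph_def by simp
    interpret rtree V r par depth \<Delta>
      by unfold_locales (use finV rt children_bound[OF T Edef deg] in auto)
    define u where "u = sqrt (real n)"
    have u1: "u \<ge> 1" unfolding u_def using n3 by simp
    have uu: "u * u = real n" unfolding u_def by simp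
    define s where "s = nat \<lceil>u\<rceil>"
    have su: "real s \<ge> u" "real s - 1 \<le> u" unfolding s_def using u1 by linarith+
    have spos: "s > 0" using su u1 by linarith
    interpret rcut V r par depth \<Delta> s by unfold_locales (rule spos)
    have finK: "finite (Kc s)" using finite_subset[OF Kc_V finV] .
    obtain \<tau> where tl: "\<forall>t. \<tau> t < l"
      and G: "(\<Sum>b\<in>UNIV. \<Sum>j<l. (\<Sum>t\<in>Kc s. zz l t b ((j + l - \<tau> t) mod l))\<^sup>2)
        \<le> (\<Sum>t\<in>Kc s. \<Sum>b\<in>UNIV. \<Sum>j<l. (zz l t b j)\<^sup>2)"
      using greedy[OF finK, of l "zz l"] zz_sum l3 by auto
    interpret rpos V r par depth \<Delta> s l \<tau>
      by unfold_locales (use lodd l3 tl in auto)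
    have cK: "real (card (Kc s)) \<le> 2 * u"
    proof -
      have "card (Kc s) = Suc (card (Kc s - {r}))" using card_Suc_Diff1[OF finK r_Kc[of s]] by simp
      also have "\<dots> \<le> Suc (card V div s)" using card_Kc[OF spos] by simp
      finally have "real (card (Kc s)) \<le> 1 + real (n div s)" using cV by simp
      also have "real (n div s) \<le> real n / real s" by (rule of_nat_div_le_of_nat)
      also have "real n / real s \<le> real n / u" using su u1 by (intro divide_left_mono) auto
      also have "real n / u = u" using uu u1 by (simp add: field_simps)
      finally show ?thesis using u1 by simp
    qed
    have w1: "sqrt u \<ge> 1" using u1 by simp
    have sq: "sqrt (2 * real l * (1 + real \<Delta> * (real s - 1)) * real (card V)) \<le> sqrt (2 * real l * (1 + real \<Delta>)) * (u * sqrt u)"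
    proof -
      have "1 + real \<Delta> * (real s - 1) \<le> 1 + real \<Delta> * u" using su by (simp add: mult_left_mono)
      also have "\<dots> \<le> (1 + real \<Delta>) * u" using u1 by (simp add: algebra_simps)
      finally have a: "1 + real \<Delta> * (real s - 1) \<le> (1 + real \<Delta>) * u" .
      have "2 * real l * (1 + real \<Delta> * (real s - 1)) * real (card V) \<le> 2 * real l * ((1 + real \<Delta>) * u) * real n"
        unfolding cV by (intro mult_right_mono mult_left_mono a) auto
      also have "\<dots> = (2 * real l * (1 + real \<Delta>)) * (u * (u * u))" using uu by (simp add: algebra_simps)
      finally have "sqrt (2 * real l * (1 + real \<Delta> * (real s - 1)) * real (card V)) \<le> sqrt ((2 * real l * (1 + real \<Delta>)) * (u * (u * u)))"
        by (rule real_sqrt_le_mono)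
      also have "\<dots> = sqrt (2 * real l * (1 + real \<Delta>)) * (sqrt u * u)"
        using u1 by (simp add: real_sqrt_mult)
      finally show ?thesis by (simp add: mult.commute)
    qed
    have errK: "real (card (Kc s) * Z0) + real (card (Kc s)) / real l \<le> 2 * (real Z0 + 1) * (u * sqrt u)"
    proof -
      have "real (card (Kc s)) / real l \<le> real (card (Kc s)) / 1"
        by (rule frac_le) (use l3 in auto)
      then have "real (card (Kc s) * Z0) + real (card (Kc s)) / real l \<le> real (card (Kc s)) * (real Z0 + 1)"
        by (simp add: algebra_simps)
      also have "\<dots> \<le> 2 * u * (real Z0 + 1)" using cK by (intro mult_right_mono) auto
      also have "\<dots> \<le> 2 * u * (real Z0 + 1) * sqrt u" using w1 u1 by simp
      finally show ?thesis by (simp add: algebra_simps)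
    qed
    have eps: "C * (u * sqrt u) \<le> \<epsilon>" using errC unfolding u_def \<epsilon>_def by simp
    have bA: "\<bar>real (Acnt j) - real n / real l\<bar> \<le> \<epsilon>" and bB: "\<bar>real (Bcnt j) - real n / real l\<bar> \<le> \<epsilon>" if j: "j < l" for j
    proof -
      note mb = main_bound[OF G j, folded Z0_def, unfolded cV]
      have Cexp: "C * (u * sqrt u) = 2 * (real Z0 + 1) * (u * sqrt u) + sqrt (2 * real l * (1 + real \<Delta>)) * (u * sqrt u)"
        unfolding C_def by (simp add: algebra_simps)
      have sq': "sqrt (2 * real l * (1 + real \<Delta> * (real s - 1)) * real n) \<le> sqrt (2 * real l * (1 + real \<Delta>)) * (u * sqrt u)"
        using sq unfolding cV .
      have "0 \<le> real (card (Kc s)) / real l" by simp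
      then show "\<bar>real (Acnt j) - real n / real l\<bar> \<le> \<epsilon>"
        using mb(1) sq' errK eps Cexp by linarith
      show "\<bar>real (Bcnt j) - real n / real l\<bar> \<le> \<epsilon>"
        using mb(2) sq' errK eps Cexp by linarith
    qed
    have mA: "Acnt j \<le> m" if "j < l" for j
      unfolding m_def using bA[OF that] unfolding \<epsilon>_def by (intro le_nat_floor) linarith
    have mB: "Bcnt j \<le> m" if "j < l" for j
      unfolding m_def using bB[OF that] unfolding \<epsilon>_def by (intro le_nat_floor) linarith
    obtain \<psi> where emb: "is_embedding \<psi> (exp_verts k V E) (exp_edges k E)
              (blowup_verts m (loose_cycle_verts k l)) (blowup_edges m (loose_cycle_edges k l))"
      and cnt: "\<forall>x\<in>loose_cycle_verts k l. \<exists>j<l.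
              card (\<psi> ` exp_verts k V E \<inter> cluster m x) = Acnt j \<or>
              card (\<psi> ` exp_verts k V E \<inter> cluster m x) = Bcnt j"
      using embed[OF Edef mA mB, of k] by blast
    have epos: "0 \<le> \<epsilon>" unfolding \<epsilon>_def by simp
    have c1: "1 \<le> real ((l - 1) * (k - 1) - 1)"
    proof -
      have "(l - 1) * (k - 1) \<ge> 2 * 2" using l3 assms by (intro mult_mono) auto
      then show ?thesis by simp
    qed
    have low: "real n / real l - real ((l - 1) * (k - 1) - 1) * real n / (ln (real n))^2 - real (k - 2) \<le> real n / real l - \<epsilon>"
    proof -
      have "\<epsilon> \<le> real ((l - 1) * (k - 1) - 1) * \<epsilon>" using c1 epos by (simp add: mult_le_cancel_right1)
      then show ?thesis unfolding \<epsilon>_def by simp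
    qed
    have main: "\<exists>\<psi>. is_embedding \<psi> (exp_verts k V E) (exp_edges k E)
              (blowup_verts m (loose_cycle_verts k l)) (blowup_edges m (loose_cycle_edges k l)) \<and>
             (\<forall>x\<in>loose_cycle_verts k l.
                real n / real l - real ((l - 1) * (k - 1) - 1) * real n / (ln (real n))^2
                  - real (k - 2)
                  \<le> real (card (\<psi> ` exp_verts k V E \<inter> cluster m x)) \<and>
                real (card (\<psi> ` exp_verts k V E \<inter> cluster m x))
                  \<le> real n / real l + real n / (ln (real n))^2)"
    proof (intro exI[of _ \<psi>] conjI emb ballI)
      fix x assume x: "x \<in> loose_cycle_verts k l"
      obtain j where j: "j < l" and cj: "card (\<psi> ` exp_verts k V E \<inter> cluster m x) = Acnt j \<or>
              card (\<psi> ` exp_verts k V E \<inter> cluster m x) = Bcnt j" using cnt x by blast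
      have b: "\<bar>real (card (\<psi> ` exp_verts k V E \<inter> cluster m x)) - real n / real l\<bar> \<le> \<epsilon>"
        using cj bA[OF j] bB[OF j] by auto
      show "real n / real l - real ((l - 1) * (k - 1) - 1) * real n / (ln (real n))^2 - real (k - 2)
                  \<le> real (card (\<psi> ` exp_verts k V E \<inter> cluster m x))"
        using b low by linarith
      show "real (card (\<psi> ` exp_verts k V E \<inter> cluster m x)) \<le> real n / real l + real n / (ln (real n))^2"
        using b unfolding \<epsilon>_def by linarith
    qed
    then show "let m = nat \<lfloor>real n / real l + real n / (ln (real n))^2\<rfloor>;
            HV = blowup_verts m (loose_cycle_verts k l);
            HE = blowup_edges m (loose_cycle_edges k l)
        in \<exists>\<psi>. is_embedding \<psi> (exp_verts k V E) (exp_edges k E) HV HE \<and>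
             (\<forall>x\<in>loose_cycle_verts k l.
                real n / real l - real ((l - 1) * (k - 1) - 1) * real n / (ln (real n))^2
                  - real (k - 2)
                  \<le> real (card (\<psi> ` exp_verts k V E \<inter> cluster m x)) \<and>
                real (card (\<psi> ` exp_verts k V E \<inter> cluster m x))
                  \<le> real n / real l + real n / (ln (real n))^2)"
      unfolding Let_def m_def .
  qed
qed

end
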